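(* Fix an integer $d\ge2$, $V,A\in\mathcal S^{d-1}$ and $\kappa>0$. Then, as $n\to+\infty$, $$P_{\text{B-exp}}(a\mid n,d,V,\kappa)=P_0(a\mid n,d,V,\kappa)+o\!\left(\frac{1}{n\sqrt n}\right),\qquad P_0(a\mid n,d,V,\kappa)=\frac{f_{\mathrm{vMF}}(A\mid V,\kappa)\,\mathcal A(\mathcal S^{d-1})}{n}.$$
   Context: $\mathcal S^{d-1}=\{x\in\mathbb R^d:\|x\|_2=1\}$ with its surface measure; $\mathcal A(\mathcal S^{d-1})$ is its total surface area. Setting: $X_1,\dots,X_n$ i.i.d. uniform on $\mathcal S^{d-1}$, $A\in\mathcal S^{d-1}$ fixed (representing an action $a$). The von Mises–Fisher density is $f_{\mathrm{vMF}}(x\mid V,\kappa)=C_d(\kappa)e^{\kappa\langle V,x\rangle}$ on $\mathcal S^{d-1}$, with normalizing constant $C_d(\kappa)=\kappa^{d/2-1}/\big((2\pi)^{d/2}I_{d/2-1}(\kappa)\big)$, $I_\nu$ the modified Bessel function of the first kind. Define $$P_{\text{B-exp}}(a\mid n,d,V,\kappa)=\mathbb E_{X_1,\dots,X_n}\Big[\frac{e^{\kappa\langle V,A\rangle}}{e^{\kappa\langle V,A\rangle}+\sum_{i=1}^n e^{\kappa\langle V,X_i\rangle}}\Big].$$ *)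

theory Defs
  imports "HOL-Probability.Probability" "HOL-Library.Landau_Symbols"
begin

text \<open>Surface measure on the unit sphere of a Euclidean space, defined as the
  (standard) cone measure: sigma(B) = DIM * lambda({t x | 0 < t <= 1, x in B}),
  i.e. DIM times the push-forward of Lebesgue measure on the punctured unit ball
  under radial projection x / norm x.\<close>
definition sphere_surface :: "'a::euclidean_space measure" where
  "sphere_surface = scale_measure (of_nat DIM('a))
     (distr (restrict_space lborel (ball 0 1 - {0})) (restrict_space borel (sphere 0 1))
        (\<lambda>x. x /\<^sub>R norm x))"

definition sphere_area :: "'a::euclidean_space itself \<Rightarrow> real" where
  "sphere_area _ = measure (sphere_surface :: 'a measure) (sphere 0 1)"

definition sphere_uniform :: "'a::euclidean_space measure" where
  "sphere_uniform = uniform_measure sphere_surface (sphere 0 1)"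

definition bessel_I :: "real \<Rightarrow> real \<Rightarrow> real" where
  "bessel_I \<nu> x = (\<Sum>m. (x / 2) powr (2 * real m + \<nu>) / (fact m * Gamma (real m + \<nu> + 1)))"

definition vMF_const :: "nat \<Rightarrow> real \<Rightarrow> real" where
  "vMF_const d \<kappa> = \<kappa> powr (real d / 2 - 1) /
      ((2 * pi) powr (real d / 2) * bessel_I (real d / 2 - 1) \<kappa>)"

definition f_vMF :: "real^'n \<Rightarrow> real^'n \<Rightarrow> real \<Rightarrow> real" where
  "f_vMF x V \<kappa> = vMF_const CARD('n) \<kappa> * exp (\<kappa> * (V \<bullet> x))"

definition P_Bexp :: "nat \<Rightarrow> real^'n \<Rightarrow> real \<Rightarrow> real^'n \<Rightarrow> real" where
  "P_Bexp n V \<kappa> A =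
     (\<integral>X. exp (\<kappa> * (V \<bullet> A)) / (exp (\<kappa> * (V \<bullet> A)) + (\<Sum>i<n. exp (\<kappa> * (V \<bullet> X i))))
        \<partial>(PiM {..<n} (\<lambda>_. (sphere_uniform :: (real^'n) measure))))"

definition P_0 :: "nat \<Rightarrow> real^'n \<Rightarrow> real \<Rightarrow> real^'n \<Rightarrow> real" where
  "P_0 n V \<kappa> A = f_vMF A V \<kappa> * sphere_area TYPE(real^'n) / real n"

end

theory Submission
  imports Defs "HOL-Real_Asymp.Real_Asymp"
begin


lemma nn_integral_hbi:
  fixes f :: "'a \<Rightarrow> real"
  assumes "has_bochner_integral M f r" "\<And>x. 0 \<le> f x"
  shows "(\<integral>\<^sup>+x. ennreal (f x) \<partial>M) = ennreal r"
  using assms by (simp add: has_bochner_integral_iff nn_integral_eq_integral)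

lemma phiA:
  assumes "t \<ge> 0"
  shows "(\<integral>\<^sup>+s. indicator {t<..} s * ennreal (s * exp (- s\<^sup>2/2)) \<partial>lborel) = ennreal (exp (- t\<^sup>2/2))"
proof -
  have "(\<integral>\<^sup>+s. indicator {t<..} s * ennreal (s * exp (- s\<^sup>2/2)) \<partial>lborel) =
        (\<integral>\<^sup>+s. ennreal (s * exp (- s\<^sup>2/2)) * indicator {t..} s \<partial>lborel)"
    by (rule nn_integral_cong_AE) (use AE_lborel_singleton[of t] in \<open>auto simp: indicator_def\<close>)
  also have "\<dots> = ennreal (0 - (- exp (- t\<^sup>2/2)))"
  proof (rule nn_integral_FTC_atLeast)
    show "((\<lambda>s::real. - exp (- s\<^sup>2/2)) \<longlongrightarrow> 0) at_top"
      by real_asymp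
  next
    fix x :: real assume "t \<le> x"
    show "((\<lambda>s. - exp (- s\<^sup>2/2)) has_real_derivative x * exp (- x\<^sup>2/2)) (at x)"
      by (auto intro!: derivative_eq_intros)
    show "0 \<le> x * exp (- x\<^sup>2/2)" using \<open>t \<le> x\<close> assms by simp
  qed simp
  finally show ?thesis by simp
qed


lemma Gamma_half_nat: "Gamma (real k + 1/2) = fact (2*k) * sqrt pi / (4^k * fact k)"
proof (induction k)
  case 0
  then show ?case by (simp add: Gamma_one_half_real)
next
  case (Suc k)
  have np: "real k + 1/2 \<notin> \<int>\<^sub>\<le>\<^sub>0"
    using nonpos_Ints_nonpos[of "real k + 1/2"] by force
  have "Gamma (real (Suc k) + 1/2) = Gamma ((real k + 1/2) + 1)" by (simp add: algebra_simps)
  also have "\<dots> = (real k + 1/2) * Gamma (real k + 1/2)" using Gamma_plus1[OF np] .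
  also have "\<dots> = (real k + 1/2) * (fact (2*k) * sqrt pi / (4^k * fact k))" using Suc by simp
  also have "\<dots> = fact (2 * Suc k) * sqrt pi / (4 ^ Suc k * fact (Suc k))"
  proof -
    have f1: "fact (2 * Suc k) = (2*real k + 2) * (2*real k+1) * (fact (2*k) :: real)"
    proof -
      have "2 * Suc k = Suc (Suc (2*k))" by simp
      then show ?thesis unfolding fact_Suc by (simp add: algebra_simps)
    qed
    have f2: "fact (Suc k) = (real k + 1) * (fact k :: real)" by simp
    have p: "(4::real)^k > 0" "fact k > (0::real)" by auto
    have q: "(2*real k+2) * (2*real k+1) / (4 * (real k+1)) = real k + 1/2" by (simp add: field_simps)
    have "fact (2 * Suc k) * sqrt pi / (4 ^ Suc k * fact (Suc k)) =
       ((2*real k+2) * (2*real k+1) / (4 * (real k+1))) * (fact (2*k) * sqrt pi / (4^k * fact k))"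
      unfolding f1 f2 by (simp add: field_simps)
    then show ?thesis unfolding q by simp

  qed
  finally show ?case .
qed

lemma gauss_abs_moment:
  "(\<integral>\<^sup>+s. ennreal (\<bar>s\<bar>^n * exp (- s\<^sup>2/2)) \<partial>lborel) =
     ennreal (sqrt (2*pi) * (if odd n then sqrt (2/pi) * 2^(n div 2) * fact (n div 2)
                               else fact n / (2^(n div 2) * fact (n div 2))))"
proof -
  have eq: "\<bar>s\<bar>^n * exp (- s\<^sup>2/2) = sqrt (2*pi) * (std_normal_density s * \<bar>s\<bar>^n)" for s :: real
    by (simp add: normal_density_def real_sqrt_mult)
  have "(\<integral>\<^sup>+s. ennreal (\<bar>s\<bar>^n * exp (- s\<^sup>2/2)) \<partial>lborel) =
        ennreal (sqrt (2*pi)) * (\<integral>\<^sup>+s. ennreal (std_normal_density s * \<bar>s\<bar>^n) \<partial>lborel)"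
    unfolding eq by (subst nn_integral_cmult[symmetric]) (auto simp: ennreal_mult)
  also have "(\<integral>\<^sup>+s. ennreal (std_normal_density s * \<bar>s\<bar>^n) \<partial>lborel) =
      ennreal (if odd n then sqrt (2/pi) * 2^(n div 2) * fact (n div 2)
                               else fact n / (2^(n div 2) * fact (n div 2)))"
  proof (cases "odd n")
    case True
    then obtain k where n: "n = 2*k+1" by (metis oddE)
    show ?thesis using nn_integral_hbi[OF std_normal_moment_abs_odd[of k]] n by simp
  next
    case False
    then obtain k where n: "n = 2*k" by (metis evenE)
    have "\<bar>s\<bar>^(2*k) = s^(2*k)" for s :: real by (simp add: power_mult power2_abs)
    then show ?thesis using nn_integral_hbi[OF std_normal_moment_even[of k]] n by simp
  qed
  finally show ?thesis by (simp add: ennreal_mult)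
qed

lemma half_line_sym:
  fixes f :: "real \<Rightarrow> real"
  assumes [measurable]: "f \<in> borel_measurable borel" and nn: "\<And>x. f x \<ge> 0" and sym: "\<And>x. f (-x) = f x"
  shows "(\<integral>\<^sup>+s. indicator {0<..} s * ennreal (f s) \<partial>lborel) = (\<integral>\<^sup>+s. ennreal (f s) \<partial>lborel) / 2"
proof -
  have "(\<integral>\<^sup>+s. ennreal (f s) \<partial>lborel) = (\<integral>\<^sup>+s. indicator {0<..} s * ennreal (f s) + indicator {..<0} s * ennreal (f s) \<partial>lborel)"
    by (rule nn_integral_cong_AE) (use AE_lborel_singleton[of 0] in \<open>auto simp: indicator_def\<close>)
  also have "\<dots> = (\<integral>\<^sup>+s. indicator {0<..} s * ennreal (f s) \<partial>lborel) + (\<integral>\<^sup>+s. indicator {..<0} s * ennreal (f s) \<partial>lborel)"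
    by (rule nn_integral_add) auto
  also have "(\<integral>\<^sup>+s. indicator {..<0} s * ennreal (f s) \<partial>lborel) = (\<integral>\<^sup>+s. indicator {0<..} s * ennreal (f s) \<partial>lborel)"
  proof -
    have "(\<integral>\<^sup>+s. indicator {..<0} s * ennreal (f s) \<partial>lborel) = ennreal \<bar>-1\<bar> * (\<integral>\<^sup>+s. indicator {..<0} (0 + -1 * s) * ennreal (f (0 + -1 * s)) \<partial>lborel)"
      by (rule nn_integral_real_affine) auto
    also have "\<dots> = (\<integral>\<^sup>+s. indicator {0<..} s * ennreal (f s) \<partial>lborel)"
      by (auto intro!: nn_integral_cong simp: sym indicator_def)
    finally show ?thesis .
  qed
  finally have "(\<integral>\<^sup>+s. ennreal (f s) \<partial>lborel) = 2 * (\<integral>\<^sup>+s. indicator {0<..} s * ennreal (f s) \<partial>lborel)"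
    by (simp add: mult_2)
  then show ?thesis
    by (simp add: ennreal_divide_times mult.commute[of 2] ennreal_mult_divide_eq)
qed

lemma a1: fixes k :: nat shows "sqrt (2*pi) * (sqrt (2/pi) * 2^k * fact k) / 2 = (2::real)^k * fact k"
proof -
  have sq: "sqrt (2*pi) * sqrt (2/pi) = 2"
    by (simp add: real_sqrt_mult[symmetric])
  have "sqrt (2*pi) * (sqrt (2/pi) * 2^k * fact k) / 2 = (sqrt (2*pi) * sqrt (2/pi)) * (2^k * fact k) / 2"
    by (simp only: mult.assoc)
  also have "\<dots> = 2^k * fact k" unfolding sq by simp
  finally show ?thesis .
qed
lemma a2: fixes k :: nat shows "sqrt (2*pi) * (fact (2*k) / (2^k * fact k)) / 2 = 2^k / sqrt 2 * (fact (2*k) * sqrt pi / (4^k * fact k))"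
proof -
  have e4: "(4::real)^k = 2^k * 2^k" by (simp add: power_mult_distrib[symmetric])
  have e5: "sqrt (2*pi) = sqrt 2 * sqrt pi" by (simp add: real_sqrt_mult)
  have s2: "2 = sqrt 2 * sqrt (2::real)" by simp
  have p: "(2::real)^k > 0" "fact k > (0::real)" "sqrt 2 > 0" by auto
  show ?thesis unfolding e4 e5 
    apply (subst (3) s2)
    using p by (simp add: field_simps)
qed
lemma TA:
  "(\<integral>\<^sup>+s. indicator {0<..} s * ennreal (s * exp (- s\<^sup>2/2)) * ennreal (s ^ (d + 2*m)) \<partial>lborel) =
     ennreal (2 powr (real m + real d/2) * Gamma (real m + real d/2 + 1))"
proof -
  define n where "n = d + 2*m + 1"
  define W where "W = sqrt (2*pi) * (if odd n then sqrt (2/pi) * 2^(n div 2) * fact (n div 2)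
                               else fact n / (2^(n div 2) * fact (n div 2)))"
  have W0: "W \<ge> 0" unfolding W_def by simp
  have "(\<integral>\<^sup>+s. indicator {0<..} s * ennreal (s * exp (- s\<^sup>2/2)) * ennreal (s ^ (d + 2*m)) \<partial>lborel) =
        (\<integral>\<^sup>+s. indicator {0<..} s * ennreal (\<bar>s\<bar>^n * exp (- s\<^sup>2/2)) \<partial>lborel)"
    unfolding n_def by (auto intro!: nn_integral_cong simp: indicator_def ennreal_mult[symmetric] power_add mult_ac)
  also have "\<dots> = (\<integral>\<^sup>+s. ennreal (\<bar>s\<bar>^n * exp (- s\<^sup>2/2)) \<partial>lborel) / 2"
    by (rule half_line_sym) auto
  also have "\<dots> = ennreal W / 2"
    unfolding W_def by (subst gauss_abs_moment) (rule refl)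
  also have "\<dots> = ennreal (W / 2)"
    using W0 by (metis divide_ennreal ennreal_numeral zero_less_numeral)
  also have "W / 2 = 2 powr (real m + real d/2) * Gamma (real m + real d/2 + 1)"
  proof (cases "even d")
    case True
    then obtain e where d: "d = 2*e" by (metis evenE)
    define k where "k = e + m"
    have n: "odd n" "n div 2 = k" using d by (simp_all add: n_def k_def)
    have sq: "sqrt (2*pi) * sqrt (2/pi) = 2"
      by (simp add: real_sqrt_mult[symmetric]) 
    have e1: "real m + real d/2 = real k" using d by (simp add: k_def)
    have e2: "Gamma (real k + 1) = fact k" using Gamma_fact[of k] by (simp add: add.commute)
    have "W / 2 = 2^k * fact k" unfolding W_def n(2) using a1[of k] n(1) by simp
    then show ?thesis unfolding e1 e2 by (simp add: powr_realpow)
  next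
    case False
    then obtain e where d: "d = 2*e+1" by (metis oddE)
    define k where "k = e + m + 1"
    have n: "\<not> odd n" "n = 2*k" "n div 2 = k" using d by (simp_all add: n_def k_def)
    have e1: "real m + real d/2 + 1 = real k + 1/2" using d by (simp add: k_def field_simps)
    have e2: "real m + real d/2 = real k - 1/2" using d by (simp add: k_def field_simps)
    have e3: "2 powr (real k - 1/2) = 2^k / sqrt 2"
      by (simp add: powr_diff powr_realpow powr_half_sqrt)
    have e4: "(4::real)^k = 2^k * 2^k" by (simp add: power_mult_distrib[symmetric])
    have e5: "sqrt (2*pi) = sqrt 2 * sqrt pi" by (simp add: real_sqrt_mult)
    have s2: "sqrt 2 * sqrt 2 = (2::real)" by simp
    have "W / 2 = 2^k / sqrt 2 * (fact (2*k) * sqrt pi / (4^k * fact k))"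
      unfolding W_def n(3) using a2[of k] n(1,2) by simp
    then show ?thesis unfolding e1 Gamma_half_nat unfolding e2 e3 .
  qed
  finally show ?thesis .
qed


lemma sphere_surface_sets: "sets (sphere_surface :: 'a::euclidean_space measure) = sets (restrict_space borel (sphere (0::'a) 1))"
  unfolding sphere_surface_def by simp

lemma sphere_surface_space: "space (sphere_surface :: 'a::euclidean_space measure) = sphere (0::'a) 1"
  unfolding sphere_surface_def by (simp add: space_scale_measure space_restrict_space)

lemma nn_integral_sphere_surface:
  fixes f :: "'a::euclidean_space \<Rightarrow> ennreal"
  assumes [measurable]: "f \<in> borel_measurable borel"
  shows "(\<integral>\<^sup>+x. f x \<partial>sphere_surface) =
    of_nat DIM('a) * (\<integral>\<^sup>+x. indicator (ball 0 1 - {0}) x * f (x /\<^sub>R norm x) \<partial>lborel)"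
proof -
  have m1: "(\<lambda>x::'a. x /\<^sub>R norm x) \<in> restrict_space lborel (ball 0 1 - {0}) \<rightarrow>\<^sub>M restrict_space borel (sphere 0 1)"
    by (rule measurable_restrict_space2) (auto simp: space_restrict_space intro!: measurable_restrict_space1)
  have m2: "f \<in> borel_measurable (restrict_space borel (sphere (0::'a) 1))"
    by (rule measurable_restrict_space1) simp
  show ?thesis
    unfolding sphere_surface_def
    apply (subst nn_integral_scale_measure)
     apply (simp add: m2 cong: measurable_cong_sets)
    apply (subst nn_integral_distr[OF m1])
     apply (simp add: m2 cong: measurable_cong_sets)
    apply (subst nn_integral_restrict_space)
     apply simp
    apply (simp add: ennreal_of_nat_eq_real_of_nat mult.commute)
    done
qed


lemma nn_integral_scale_euclid:
  fixes f :: "'a::euclidean_space \<Rightarrow> ennreal"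
  assumes f[measurable]: "f \<in> borel_measurable borel" and c: "c > 0"
  shows "(\<integral>\<^sup>+x. f x \<partial>lborel) = ennreal (c ^ DIM('a)) * (\<integral>\<^sup>+x. f (c *\<^sub>R x) \<partial>lborel)"
proof -
  have "(\<integral>\<^sup>+x. f x \<partial>lborel) = (\<integral>\<^sup>+x. f x \<partial>(density (distr lborel borel (\<lambda>x. 0 + c *\<^sub>R x)) (\<lambda>_. ennreal (\<bar>c\<bar>^DIM('a)))))"
    by (rule arg_cong[where f="\<lambda>M. \<integral>\<^sup>+x. f x \<partial>M"]) (rule lborel_affine, use c in simp)
  also have "\<dots> = ennreal (c ^ DIM('a)) * (\<integral>\<^sup>+x. f (c *\<^sub>R x) \<partial>lborel)"
    using c by (simp add: nn_integral_density nn_integral_distr nn_integral_cmult)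
  finally show ?thesis .
qed


lemma layer_cake:
  fixes g :: "'a::euclidean_space \<Rightarrow> ennreal" and \<psi> :: "real \<Rightarrow> ennreal"
  assumes [measurable]: "g \<in> borel_measurable borel" "\<psi> \<in> borel_measurable borel"
  assumes hom: "\<And>c x. c > 0 \<Longrightarrow> g (c *\<^sub>R x) = ennreal (c ^ p) * g x"
  shows "(\<integral>\<^sup>+x. (\<integral>\<^sup>+s. indicator {norm x<..} s * \<psi> s \<partial>lborel) * g x \<partial>lborel) =
         (\<integral>\<^sup>+s. indicator {0<..} s * \<psi> s * ennreal (s ^ (DIM('a) + p)) \<partial>lborel) *
         (\<integral>\<^sup>+x. indicator (ball 0 1) x * g x \<partial>lborel)"
proof -
  have P: "pair_sigma_finite (lborel::'a measure) (lborel::real measure)"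
    unfolding pair_sigma_finite_def by (simp add: lborel.sigma_finite_measure_axioms)
  define B where "B = (\<integral>\<^sup>+x. indicator (ball 0 1) x * g x \<partial>lborel)"
  have ind: "indicator {norm x<..} s = (if norm x < s then 1 else (0::ennreal))" for x :: 'a and s :: real
    by (simp add: indicator_def)
  have meas: "(\<lambda>p::'a \<times> real. indicator {norm (fst p)<..} (snd p) * \<psi> (snd p) * g (fst p)) \<in> borel_measurable (lborel \<Otimes>\<^sub>M lborel)"
    unfolding ind by measurable
  have inner: "(\<integral>\<^sup>+x. indicator {norm x<..} s * \<psi> s * g x \<partial>lborel) = indicator {0<..} s * \<psi> s * ennreal (s ^ (DIM('a) + p)) * B" for s
  proof (cases "s > 0")
    case False
    have "indicator {norm x<..} s = (0::ennreal)" for x :: 'a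
    proof -
      have "\<not> norm x < s" using False norm_ge_zero[of x] by linarith
      then show ?thesis by (simp add: indicator_def)
    qed
    then show ?thesis using False by simp
  next
    case True
    have "(\<integral>\<^sup>+x. indicator {norm x<..} s * \<psi> s * g x \<partial>lborel) = \<psi> s * (\<integral>\<^sup>+x. indicator (ball 0 s) x * g x \<partial>lborel)"
      by (subst nn_integral_cmult[symmetric]) (auto intro!: nn_integral_cong simp: indicator_def dist_norm mult.commute)
    also have "(\<integral>\<^sup>+x. indicator (ball 0 s) x * g x \<partial>lborel) = ennreal (s ^ DIM('a)) * (\<integral>\<^sup>+x. indicator (ball 0 s) (s *\<^sub>R x) * g (s *\<^sub>R x) \<partial>lborel)"
      by (rule nn_integral_scale_euclid) (use True in \<open>auto intro!: borel_measurable_times_ennreal borel_measurable_indicator\<close>)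
    also have "(\<integral>\<^sup>+x. indicator (ball 0 s) (s *\<^sub>R x) * g (s *\<^sub>R x) \<partial>lborel) = ennreal (s ^ p) * B"
      unfolding B_def
      by (subst nn_integral_cmult[symmetric]) (use True in \<open>auto intro!: nn_integral_cong simp: hom indicator_def dist_norm\<close>)
    finally show ?thesis using True by (simp add: ennreal_mult' power_add mult_ac)
  qed
  have "(\<integral>\<^sup>+x. (\<integral>\<^sup>+s. indicator {norm x<..} s * \<psi> s \<partial>lborel) * g x \<partial>lborel)
     = (\<integral>\<^sup>+x. (\<integral>\<^sup>+s. indicator {norm x<..} s * \<psi> s * g x \<partial>lborel) \<partial>lborel)"
    by (rule nn_integral_cong) (simp add: nn_integral_multc[symmetric] ind)
  also have "\<dots> = (\<integral>\<^sup>+s. (\<integral>\<^sup>+x. indicator {norm x<..} s * \<psi> s * g x \<partial>lborel) \<partial>lborel)"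
    using pair_sigma_finite.Fubini'[OF P, of "\<lambda>x s. indicator {norm x<..} s * \<psi> s * g x"] meas
    by (simp add: case_prod_beta')
  also have "\<dots> = (\<integral>\<^sup>+s. indicator {0<..} s * \<psi> s * ennreal (s ^ (DIM('a) + p)) \<partial>lborel) * B"
    by (simp add: inner nn_integral_multc)
  finally show ?thesis unfolding B_def .
qed


abbreviation "stdN \<equiv> density lborel (\<lambda>x. ennreal (std_normal_density x))"

lemma prob_space_stdN: "prob_space stdN"
  by (rule prob_space_normal_density) simp

lemma PiM_std_normal_density:
  fixes I :: "'i set" assumes fin: "finite I"
  shows "PiM I (\<lambda>_. stdN) = density (PiM I (\<lambda>_. lborel)) (\<lambda>x. \<Prod>i\<in>I. ennreal (std_normal_density (x i)))"
proof -
  have psf: "product_sigma_finite (\<lambda>_::'i. stdN)"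
    unfolding product_sigma_finite_def using prob_space_imp_sigma_finite[OF prob_space_stdN] by simp
  interpret L: product_sigma_finite "\<lambda>_::'i. (lborel::real measure)"
    by (simp add: product_sigma_finite_def lborel.sigma_finite_measure_axioms)
  show ?thesis
  proof (rule product_sigma_finite.PiM_eqI[OF psf fin, symmetric])
    show "sets (density (PiM I (\<lambda>_. lborel)) (\<lambda>x. \<Prod>i\<in>I. ennreal (std_normal_density (x i)))) = sets (PiM I (\<lambda>_. stdN))"
      by (simp cong: sets_PiM_cong)
  next
    fix A assume A: "\<And>i. i \<in> I \<Longrightarrow> A i \<in> sets stdN"
    then have A'[measurable]: "\<And>i. i \<in> I \<Longrightarrow> A i \<in> sets lborel" by simp
    have PA: "Pi\<^sub>E I A \<in> sets (PiM I (\<lambda>_. lborel))"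
      by (rule sets_PiM_I_finite[OF fin]) (use A' in auto)
    have ind: "(\<Prod>i\<in>I. ennreal (std_normal_density (x i))) * indicator (Pi\<^sub>E I A) x =
               (\<Prod>i\<in>I. ennreal (std_normal_density (x i)) * indicator (A i) (x i))"
      if x: "x \<in> space (PiM I (\<lambda>_. lborel))" for x
    proof (cases "\<forall>i\<in>I. x i \<in> A i")
      case True
      then have "x \<in> Pi\<^sub>E I A" using x by (auto simp: space_PiM PiE_def)
      then show ?thesis using True by (simp add: prod.distrib)
    next
      case False
      then obtain j where j: "j \<in> I" "x j \<notin> A j" by auto
      then have "x \<notin> Pi\<^sub>E I A" by auto
      moreover have "(\<Prod>i\<in>I. ennreal (std_normal_density (x i)) * indicator (A i) (x i)) = 0"
        by (intro prod_zero[OF fin] bexI[OF _ j(1)]) (use j in simp)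
      ultimately show ?thesis by simp
    qed
    have "emeasure (density (PiM I (\<lambda>_. lborel)) (\<lambda>x. \<Prod>i\<in>I. ennreal (std_normal_density (x i)))) (Pi\<^sub>E I A)
       = (\<integral>\<^sup>+x. (\<Prod>i\<in>I. ennreal (std_normal_density (x i))) * indicator (Pi\<^sub>E I A) x \<partial>PiM I (\<lambda>_. lborel))"
      by (subst emeasure_density) (auto simp: PA)
    also have "\<dots> = (\<integral>\<^sup>+x. (\<Prod>i\<in>I. ennreal (std_normal_density (x i)) * indicator (A i) (x i)) \<partial>PiM I (\<lambda>_. lborel))"
      by (rule nn_integral_cong) (rule ind)
    also have "\<dots> = (\<Prod>i\<in>I. (\<integral>\<^sup>+y. ennreal (std_normal_density y) * indicator (A i) y \<partial>lborel))"
      by (rule L.product_nn_integral_prod[OF fin]) (use A' in auto)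
    also have "\<dots> = (\<Prod>i\<in>I. emeasure stdN (A i))"
      by (rule prod.cong) (use A' in \<open>auto simp: emeasure_density\<close>)
    finally show "emeasure (density (PiM I (\<lambda>_. lborel)) (\<lambda>x. \<Prod>i\<in>I. ennreal (std_normal_density (x i)))) (Pi\<^sub>E I A) = (\<Prod>i\<in>I. emeasure stdN (A i))" .
  qed
qed

lemma distributed_inner_normal:
  fixes V :: "'a::euclidean_space"
  assumes V: "norm V = 1"
  shows "distributed (PiM (Basis::'a set) (\<lambda>_. stdN)) lborel (\<lambda>f. \<Sum>b\<in>Basis. (V \<bullet> b) * f b) (\<lambda>x. ennreal (std_normal_density x))"
proof -
  define G where "G = PiM (Basis::'a set) (\<lambda>_. stdN)"
  interpret G: prob_space G unfolding G_def by (rule prob_space_PiM) (rule prob_space_stdN)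
  have comp: "distr G stdN (\<lambda>f. f b) = stdN" if "b \<in> Basis" for b
    unfolding G_def by (rule distr_PiM_component) (use that prob_space_stdN in auto)
  have rv: "(\<lambda>f. f b) \<in> G \<rightarrow>\<^sub>M stdN" if "b \<in> Basis" for b
    unfolding G_def using that by simp
  have de: "distr G (PiM Basis (\<lambda>_. stdN)) (\<lambda>x. \<lambda>b\<in>Basis. x b) = PiM Basis (\<lambda>b. distr G stdN (\<lambda>x. x b))"
  proof -
    have "distr G (PiM Basis (\<lambda>_. stdN)) (\<lambda>x. \<lambda>b\<in>Basis. x b) = distr G G (\<lambda>x. x)"
      by (rule distr_cong) (auto simp: G_def space_PiM PiE_def extensional_restrict)
    also have "\<dots> = G" by simp
    also have "G = PiM Basis (\<lambda>b. distr G stdN (\<lambda>x. x b))"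
      unfolding G_def by (rule PiM_cong) (auto simp: comp[unfolded G_def])
    finally show ?thesis .
  qed
  have rv_all: "(\<lambda>f. f i) \<in> G \<rightarrow>\<^sub>M stdN" for i
  proof (cases "i \<in> Basis")
    case True then show ?thesis by (rule rv)
  next
    case False
    have "(\<lambda>f. f i) \<in> G \<rightarrow>\<^sub>M stdN \<longleftrightarrow> (\<lambda>f. undefined) \<in> G \<rightarrow>\<^sub>M stdN"
      by (rule measurable_cong) (use False in \<open>auto simp: G_def space_PiM PiE_def extensional_def\<close>)
    then show ?thesis by simp
  qed
  have indep0: "G.indep_vars (\<lambda>_. stdN) (\<lambda>b f. f b) (Basis::'a set)"
    using G.indep_vars_iff_distr_eq_PiM[where I="Basis::'a set" and M'="\<lambda>_. stdN" and X="\<lambda>b f. f b"] rv_all de by simp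
  define I where "I = {b\<in>(Basis::'a set). V \<bullet> b \<noteq> 0}"
  have I: "finite I" "I \<subseteq> Basis" unfolding I_def by auto
  have Ine: "I \<noteq> {}"
  proof
    assume "I = {}"
    then have "\<forall>b\<in>Basis. V \<bullet> b = 0" unfolding I_def by auto
    then have "V = 0" by (simp add: euclidean_all_zero_iff)
    with V show False by simp
  qed
  have indep1: "G.indep_vars (\<lambda>_. borel) (\<lambda>b f. (V \<bullet> b) * f b) I"
  proof -
    have A: "G.indep_vars (\<lambda>_. stdN) (\<lambda>b f. f b) I" by (rule G.indep_vars_subset[OF indep0 I(2)])
    have B: "\<And>b. b \<in> I \<Longrightarrow> (\<lambda>u. (V \<bullet> b) * u) \<in> stdN \<rightarrow>\<^sub>M borel"
      by (subst measurable_cong_sets[OF sets_density refl]) simp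
    show ?thesis using G.indep_vars_compose2[OF A B] .
  qed
  have dist1: "distributed G lborel (\<lambda>f. (V \<bullet> b) * f b) (\<lambda>x. ennreal (normal_density 0 \<bar>V \<bullet> b\<bar> x))"
    if "b \<in> I" for b
  proof -
    have b: "b \<in> Basis" "V \<bullet> b \<noteq> 0" using that I_def by auto
    have d0: "distributed G lborel (\<lambda>f. f b) (\<lambda>x. ennreal (std_normal_density x))"
      unfolding distributed_def
    proof (intro conjI)
      have "distr G lborel (\<lambda>f. f b) = distr G stdN (\<lambda>f. f b)" by (rule distr_cong) auto
      then show "distr G lborel (\<lambda>f. f b) = stdN" using comp[OF b(1)] by simp
      show "(\<lambda>f. f b) \<in> G \<rightarrow>\<^sub>M lborel" using rv[OF b(1)] by (subst measurable_cong_sets[OF refl sets_density, symmetric])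
    qed simp
    have "distributed G lborel (\<lambda>x. 0 + (V \<bullet> b) * x b) (\<lambda>x. ennreal (normal_density (0 + (V \<bullet> b) * 0) (\<bar>V \<bullet> b\<bar> * 1) x))"
      by (rule G.normal_density_affine[OF d0]) (use b(2) in simp_all)
    then show ?thesis by simp
  qed
  have "distributed G lborel (\<lambda>x. \<Sum>b\<in>I. (V \<bullet> b) * x b)
          (\<lambda>x. ennreal (normal_density (\<Sum>b\<in>I. 0) (sqrt (\<Sum>b\<in>I. (\<bar>V \<bullet> b\<bar>)\<^sup>2)) x))"
    by (rule G.sum_indep_normal[OF I(1) Ine indep1]) (auto simp: I_def intro: dist1)
  moreover have "(\<lambda>x. \<Sum>b\<in>I. (V \<bullet> b) * x b) = (\<lambda>x. \<Sum>b\<in>Basis. (V \<bullet> b) * x b)"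
    by (rule ext, rule sum.mono_neutral_left) (auto simp: I_def)
  moreover have "sqrt (\<Sum>b\<in>I. (\<bar>V \<bullet> b\<bar>)\<^sup>2) = 1"
  proof -
    have "(\<Sum>b\<in>I. (\<bar>V \<bullet> b\<bar>)\<^sup>2) = (\<Sum>b\<in>I. (V \<bullet> b)\<^sup>2)" by simp
    also have "\<dots> = (\<Sum>b\<in>Basis. (V \<bullet> b)\<^sup>2)"
      by (rule sum.mono_neutral_left) (auto simp: I_def)
    also have "\<dots> = V \<bullet> V" by (subst euclidean_inner[of V V]) (simp add: power2_eq_square)
    also have "\<dots> = 1" using V by (simp add: power2_norm_eq_inner[symmetric])
    finally show ?thesis by simp
  qed
  ultimately show ?thesis unfolding G_def by simp
qed


lemma gauss_moment_euclid:
  fixes V :: "'a::euclidean_space"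
  assumes V: "norm V = 1"
  shows "(\<integral>\<^sup>+x. ennreal (exp (- (norm x)\<^sup>2/2) * (V \<bullet> x)^(2*m)) \<partial>lborel) =
         ennreal ((2*pi) powr (real DIM('a)/2) * (fact (2*m) / (2^m * fact m)))"
proof -
  let ?E = "\<lambda>f::'a\<Rightarrow>real. \<Sum>b\<in>Basis. f b *\<^sub>R b"
  let ?P = "PiM (Basis::'a set) (\<lambda>_. lborel::real measure)"
  let ?X = "\<lambda>f::'a\<Rightarrow>real. \<Sum>b\<in>Basis. (V \<bullet> b) * f b"
  have inner: "V \<bullet> ?E f = ?X f" for f by (simp add: inner_sum_right mult.commute)
  have nrm: "(norm (?E f))\<^sup>2 = (\<Sum>b\<in>Basis. (f b)\<^sup>2)" for f
  proof -
    have "(norm (?E f))\<^sup>2 = ?E f \<bullet> ?E f" by (simp add: power2_norm_eq_inner)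
    also have "\<dots> = (\<Sum>b\<in>Basis. (?E f \<bullet> b) * (?E f \<bullet> b))" by (rule euclidean_inner)
    also have "\<dots> = (\<Sum>b\<in>Basis. (f b)\<^sup>2)" by (simp add: inner_sum_left_Basis power2_eq_square)
    finally show ?thesis .
  qed
  have gexp: "exp (- (norm (?E f))\<^sup>2/2) = sqrt (2*pi)^DIM('a) * (\<Prod>b\<in>Basis. std_normal_density (f b))" for f
  proof -
    have "(\<Prod>b\<in>Basis. std_normal_density (f b)) = (\<Prod>b\<in>(Basis::'a set). 1 / sqrt (2*pi) * exp (- (f b)\<^sup>2/2))"
      by (simp add: std_normal_density_def)
    also have "\<dots> = (\<Prod>b\<in>(Basis::'a set). 1 / sqrt (2*pi)) * (\<Prod>b\<in>(Basis::'a set). exp (- (f b)\<^sup>2/2))"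
      by (rule prod.distrib)
    also have "\<dots> = (1 / sqrt (2*pi))^DIM('a) * exp (\<Sum>b\<in>(Basis::'a set). - (f b)\<^sup>2/2)"
      by (simp only: prod_constant exp_sum finite_Basis)
    also have "(\<Sum>b\<in>(Basis::'a set). - (f b)\<^sup>2/2) = - (norm (?E f))\<^sup>2/2"
      unfolding nrm by (simp add: sum_divide_distrib sum_negf)
    finally have "(\<Prod>b\<in>Basis. std_normal_density (f b)) = (1 / sqrt (2*pi))^DIM('a) * exp (- (norm (?E f))\<^sup>2/2)" .
    then show ?thesis by (simp add: power_one_over field_simps)
  qed
  have mE[measurable]: "?E \<in> ?P \<rightarrow>\<^sub>M borel" by measurable
  have "(\<integral>\<^sup>+x. ennreal (exp (- (norm x)\<^sup>2/2) * (V \<bullet> x)^(2*m)) \<partial>lborel) =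
        (\<integral>\<^sup>+x. ennreal (exp (- (norm x)\<^sup>2/2) * (V \<bullet> x)^(2*m)) \<partial>distr ?P borel ?E)"
    by (subst lborel_eq) (rule refl)
  also have "\<dots> = (\<integral>\<^sup>+f. ennreal (exp (- (norm (?E f))\<^sup>2/2) * (V \<bullet> ?E f)^(2*m)) \<partial>?P)"
    by (rule nn_integral_distr) (rule mE, simp)
  also have "\<dots> = (\<integral>\<^sup>+f. ennreal (sqrt (2*pi)^DIM('a)) * ((\<Prod>b\<in>Basis. ennreal (std_normal_density (f b))) * ennreal ((?X f)^(2*m))) \<partial>?P)"
  proof (rule nn_integral_cong)
    fix f :: "'a \<Rightarrow> real"
    have e: "exp (- (norm (?E f))\<^sup>2/2) * (V \<bullet> ?E f)^(2*m) = sqrt (2*pi)^DIM('a) * ((\<Prod>b\<in>Basis. std_normal_density (f b)) * (?X f)^(2*m))"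
      unfolding gexp inner by (simp only: mult.assoc)
    show "ennreal (exp (- (norm (?E f))\<^sup>2/2) * (V \<bullet> ?E f)^(2*m)) = ennreal (sqrt (2*pi)^DIM('a)) * ((\<Prod>b\<in>Basis. ennreal (std_normal_density (f b))) * ennreal ((?X f)^(2*m)))"
      unfolding e by (simp add: ennreal_mult prod_ennreal zero_le_even_power prod_nonneg)
  qed
  also have "\<dots> = ennreal (sqrt (2*pi)^DIM('a)) * (\<integral>\<^sup>+f. (\<Prod>b\<in>Basis. ennreal (std_normal_density (f b))) * ennreal ((?X f)^(2*m)) \<partial>?P)"
    by (rule nn_integral_cmult) measurable
  also have "(\<integral>\<^sup>+f. (\<Prod>b\<in>Basis. ennreal (std_normal_density (f b))) * ennreal ((?X f)^(2*m)) \<partial>?P) =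
             (\<integral>\<^sup>+f. ennreal ((?X f)^(2*m)) \<partial>density ?P (\<lambda>f. \<Prod>b\<in>Basis. ennreal (std_normal_density (f b))))"
    by (rule nn_integral_density[symmetric]) measurable
  also have "density ?P (\<lambda>f. \<Prod>b\<in>Basis. ennreal (std_normal_density (f b))) = PiM Basis (\<lambda>_. stdN)"
    by (rule PiM_std_normal_density[symmetric]) simp
  also have "(\<integral>\<^sup>+f. ennreal ((?X f)^(2*m)) \<partial>PiM Basis (\<lambda>_. stdN)) =
             (\<integral>\<^sup>+u. ennreal (std_normal_density u) * ennreal (u^(2*m)) \<partial>lborel)"
    by (rule distributed_nn_integral[OF distributed_inner_normal[OF V], symmetric]) simp
  also have "\<dots> = ennreal (fact (2*m) / (2^m * fact m))"
    using nn_integral_hbi[OF std_normal_moment_even[of m]]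
    by (simp add: ennreal_mult'[symmetric] zero_le_even_power)
  also have "sqrt (2*pi)^DIM('a) = (2*pi) powr (real DIM('a)/2)"
    by (simp add: powr_half_sqrt[symmetric] powr_realpow[symmetric] powr_powr)
  finally show ?thesis by (simp add: ennreal_mult'[symmetric])
qed


lemma phiB:
  assumes t: "t \<ge> 0"
  shows "(\<integral>\<^sup>+s. indicator {t<..} s * (indicator {..1} s * ennreal (real (2*m) * s^(2*m-1))) \<partial>lborel) =
         ennreal (if t \<le> 1 then 1 - t^(2*m) else 0)"
proof (cases "t \<le> 1")
  case False
  have "(\<lambda>s::real. indicator {t<..} s * (indicator {..1} s * ennreal (real (2*m) * s^(2*m-1)))) = (\<lambda>_. 0::ennreal)"
    using False by (auto simp: indicator_def)
  then show ?thesis using False by simp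
next
  case True
  have "(\<integral>\<^sup>+s. indicator {t<..} s * (indicator {..1} s * ennreal (real (2*m) * s^(2*m-1))) \<partial>lborel) =
        (\<integral>\<^sup>+s. ennreal (real (2*m) * s^(2*m-1)) * indicator {t..1} s \<partial>lborel)"
    by (rule nn_integral_cong_AE) (use AE_lborel_singleton[of t] in \<open>auto simp: indicator_def\<close>)
  also have "\<dots> = ennreal (1^(2*m) - t^(2*m))"
  proof (rule nn_integral_has_integral_lebesgue')
    show "0 \<le> real (2*m) * s^(2*m-1)" if "s \<in> {t..1}" for s using that t by simp
    have "((\<lambda>s. s^(2*m)) has_vector_derivative real (2*m) * s^(2*m-1)) (at s within {t..1})" for s :: real
      using DERIV_pow[of "2*m" s] by (simp add: has_real_derivative_iff_has_vector_derivative[symmetric] has_field_derivative_at_within)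
    then show "((\<lambda>s. real (2*m) * s^(2*m-1)) has_integral 1^(2*m) - t^(2*m)) {t..1}"
      using fundamental_theorem_of_calculus[OF True, of "\<lambda>s. s^(2*m)" "\<lambda>s. real (2*m) * s^(2*m-1)"] by simp
  qed
  finally show ?thesis using True by simp
qed

lemma TB:
  "(\<integral>\<^sup>+s. indicator {0<..} s * (indicator {..1} s * ennreal (real (2*m) * s^(2*m-1))) * ennreal (s ^ (d + 0)) \<partial>lborel) =
   ennreal (real (2*m) / real (2*m+d))"
proof (cases "m = 0")
  case True then show ?thesis by simp
next
  case False
  have "(\<integral>\<^sup>+s. indicator {0<..} s * (indicator {..1} s * ennreal (real (2*m) * s^(2*m-1))) * ennreal (s ^ (d + 0)) \<partial>lborel) =
        (\<integral>\<^sup>+s. ennreal (real (2*m) * s^(2*m+d-1)) * indicator {0..1} s \<partial>lborel)"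
  proof (rule nn_integral_cong_AE)
    show "AE s in lborel. indicator {0<..} s * (indicator {..1} s * ennreal (real (2*m) * s^(2*m-1))) * ennreal (s ^ (d + 0)) =
          ennreal (real (2*m) * s^(2*m+d-1)) * indicator {0..1} s"
      using AE_lborel_singleton[of 0]
    proof eventually_elim
      case (elim s)
      have "s^(2*m-1) * s^d = s^(2*m+d-1)" using False by (simp add: power_add[symmetric])
      then show ?case using elim
        by (auto simp: indicator_def ennreal_mult'[symmetric] mult.assoc)
    qed
  qed
  also have "\<dots> = ennreal ((real (2*m) / real (2*m+d)) * 1^(2*m+d) - (real (2*m) / real (2*m+d)) * 0^(2*m+d))"
  proof (rule nn_integral_has_integral_lebesgue')
    show "0 \<le> real (2*m) * s^(2*m+d-1)" if "s \<in> {0..1}" for s using that by simp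
    have "((\<lambda>s. (real (2*m) / real (2*m+d)) * s^(2*m+d)) has_vector_derivative real (2*m) * s^(2*m+d-1)) (at s within {0..1})" for s :: real
    proof -
      have "((\<lambda>s. (real (2*m) / real (2*m+d)) * s^(2*m+d)) has_real_derivative (real (2*m) / real (2*m+d)) * (real (2*m+d) * s^(2*m+d-1))) (at s)"
        using DERIV_pow[of "2*m+d" s] by (intro DERIV_cmult) simp
      moreover have "(real (2*m) / real (2*m+d)) * (real (2*m+d) * s^(2*m+d-1)) = real (2*m) * s^(2*m+d-1)"
        using False by simp
      ultimately show ?thesis
        by (simp add: has_real_derivative_iff_has_vector_derivative[symmetric] has_field_derivative_at_within)
    qed
    then show "((\<lambda>s. real (2*m) * s^(2*m+d-1)) has_integral (real (2*m) / real (2*m+d)) * 1^(2*m+d) - (real (2*m) / real (2*m+d)) * 0^(2*m+d)) {0..1}"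
      using fundamental_theorem_of_calculus[of 0 1 "\<lambda>s. (real (2*m) / real (2*m+d)) * s^(2*m+d)" "\<lambda>s. real (2*m) * s^(2*m+d-1)"] by simp
  qed
  also have "(0::real)^(2*m+d) = 0" using False by simp
  finally show ?thesis by simp
qed


lemma sphere_moment_algebra:
  fixes d m :: nat and ev tv b g1 :: real
  assumes d: "d > 0"
  assumes ev: "ev = (2*pi) powr (real d/2) * (fact (2*m) / (2^m * fact m))"
  assumes tv: "tv = 2 powr (real m + real d/2) * Gamma (real m + real d/2 + 1)"
  assumes e1: "ev = tv * b" and e2: "g1 = b + real (2*m) / real (2*m+d) * g1"
  shows "real d * g1 = 2 * pi powr (real d/2) * fact (2*m) / (4^m * fact m * Gamma (real m + real d/2))"
proof -
  define z where "z = real m + real d/2"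
  have z0: "z > 0" using d by (simp add: z_def)
  have Gz: "Gamma (z + 1) = z * Gamma z"
    by (rule Gamma_plus1) (use z0 nonpos_Ints_nonpos in force)
  have Gpos: "Gamma z > 0" using z0 by (rule Gamma_real_pos)
  have tvpos: "tv > 0" unfolding tv z_def[symmetric] Gz using z0 Gpos by simp
  have g1: "real d * g1 = real (2*m+d) * b"
  proof -
    have "real (2*m+d) * g1 = real (2*m+d) * b + real (2*m) * g1"
      using e2 d by (subst e2) (simp add: field_simps)
    then show ?thesis by (simp add: algebra_simps)
  qed
  have b: "b = ev / tv" using e1 tvpos by simp
  have p1: "(2*pi) powr (real d/2) = 2 powr (real d/2) * pi powr (real d/2)" by (simp add: powr_mult)
  have p2: "2 powr (real m + real d/2) = 2^m * 2 powr (real d/2)" by (simp add: powr_add powr_realpow)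
  have p3: "(4::real)^m = 2^m * 2^m" by (simp add: power_mult_distrib[symmetric])
  have two: "real (2*m+d) = 2 * z" by (simp add: z_def)
  have "real d * g1 = 2 * z * ((2*pi) powr (real d/2) * (fact (2*m) / (2^m * fact m))) / (2 powr (real m + real d/2) * (z * Gamma z))"
    unfolding g1 b two ev tv z_def[symmetric] Gz by simp
  also have "\<dots> = 2 * pi powr (real d/2) * fact (2*m) / (4^m * fact m * Gamma z)"
    unfolding p1 p2 p3 using z0 Gpos by (simp add: field_simps)
  finally show ?thesis unfolding z_def .
qed

lemma sphere_moment:
  fixes V :: "'a::euclidean_space"
  assumes V: "norm V = 1"
  shows "(\<integral>\<^sup>+\<theta>. ennreal ((V \<bullet> \<theta>)^(2*m)) \<partial>(sphere_surface::'a measure)) =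
     ennreal (2 * pi powr (real DIM('a)/2) * fact (2*m) / (4^m * fact m * Gamma (real m + real DIM('a)/2)))"
proof -
  define g0 where "g0 = (\<lambda>x::'a. ennreal ((V \<bullet> (x /\<^sub>R norm x))^(2*m)))"
  define g where "g = (\<lambda>x::'a. ennreal (norm x ^ (2*m)) * g0 x)"
  define G1 where "G1 = (\<integral>\<^sup>+x. indicator (ball 0 1) x * g0 x \<partial>lborel)"
  define B where "B = (\<integral>\<^sup>+x. indicator (ball 0 1) x * g x \<partial>lborel)"
  have g0m[measurable]: "g0 \<in> borel_measurable borel" unfolding g0_def by measurable
  have gm[measurable]: "g \<in> borel_measurable borel" unfolding g_def by measurable
  have [measurable]: "g \<in> borel_measurable lborel" "g0 \<in> borel_measurable lborel" using gm g0m by simp_all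
  have [measurable]: "ball (0::'a) 1 \<in> sets lborel" by simp
  have unit: "(c *\<^sub>R x) /\<^sub>R norm (c *\<^sub>R x) = x /\<^sub>R norm x" if "c > 0" for c and x :: 'a
    using that by (cases "x = 0") (simp_all add: field_simps)
  have hom0: "g0 (c *\<^sub>R x) = ennreal (c^0) * g0 x" if "c > 0" for c x
    by (simp only: g0_def unit[OF that]) simp
  have homg: "g (c *\<^sub>R x) = ennreal (c^(2*m)) * g x" if "c > 0" for c x
  proof -
    have "norm (c *\<^sub>R x) ^ (2*m) = c^(2*m) * norm x ^ (2*m)" using that by (simp add: power_mult_distrib)
    then show ?thesis unfolding g_def hom0[OF that] using that by (simp add: ennreal_mult' mult_ac)
  qed
  have g0le: "g0 x \<le> 1" for x
  proof -
    have "norm (x /\<^sub>R norm x) \<le> 1" by (cases "x = 0") simp_all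
    then have "\<bar>V \<bullet> (x /\<^sub>R norm x)\<bar> \<le> 1" using Cauchy_Schwarz_ineq2[of V "x /\<^sub>R norm x"] V by simp
    then have "\<bar>V \<bullet> (x /\<^sub>R norm x)\<bar>^(2*m) \<le> 1" by (rule power_le_one[OF abs_ge_zero])
    then show ?thesis by (simp add: g0_def power_abs[symmetric] power_mult power2_abs)
  qed
  have G1fin: "G1 < \<infinity>"
  proof -
    have "G1 \<le> (\<integral>\<^sup>+x. indicator (ball (0::'a) 1) x \<partial>lborel)"
      unfolding G1_def by (rule nn_integral_mono) (use g0le in \<open>auto simp: indicator_def\<close>)
    also have "\<dots> = emeasure lborel (ball (0::'a) 1)" by simp
    also have "\<dots> < \<infinity>" by (rule emeasure_bounded_finite) simp
    finally show ?thesis .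
  qed
  have cone: "(\<integral>\<^sup>+\<theta>. ennreal ((V \<bullet> \<theta>)^(2*m)) \<partial>(sphere_surface::'a measure)) = of_nat DIM('a) * G1"
  proof -
    have "(\<integral>\<^sup>+\<theta>. ennreal ((V \<bullet> \<theta>)^(2*m)) \<partial>(sphere_surface::'a measure)) =
          of_nat DIM('a) * (\<integral>\<^sup>+x. indicator (ball 0 1 - {0}) x * ennreal ((V \<bullet> (x /\<^sub>R norm x))^(2*m)) \<partial>lborel)"
      by (rule nn_integral_sphere_surface) measurable
    also have "(\<integral>\<^sup>+x. indicator (ball 0 1 - {0}) x * ennreal ((V \<bullet> (x /\<^sub>R norm x))^(2*m)) \<partial>lborel) = G1"
      unfolding G1_def g0_def
      by (rule nn_integral_cong_AE, use AE_lborel_singleton[of 0] in eventually_elim) (auto simp: indicator_def)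
    finally show ?thesis .
  qed
  have LA: "ennreal ((2*pi) powr (real DIM('a)/2) * (fact (2*m) / (2^m * fact m))) =
            ennreal (2 powr (real m + real DIM('a)/2) * Gamma (real m + real DIM('a)/2 + 1)) * B"
  proof -
    have "(\<integral>\<^sup>+x. (\<integral>\<^sup>+s. indicator {norm x<..} s * ennreal (s * exp (- s\<^sup>2/2)) \<partial>lborel) * g x \<partial>lborel) =
          (\<integral>\<^sup>+s. indicator {0<..} s * ennreal (s * exp (- s\<^sup>2/2)) * ennreal (s ^ (DIM('a) + 2*m)) \<partial>lborel) * B"
      unfolding B_def by (rule layer_cake[OF gm _ homg]) measurable
    also have "(\<integral>\<^sup>+s. indicator {0<..} s * ennreal (s * exp (- s\<^sup>2/2)) * ennreal (s ^ (DIM('a) + 2*m)) \<partial>lborel) =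
          ennreal (2 powr (real m + real DIM('a)/2) * Gamma (real m + real DIM('a)/2 + 1))"
      by (rule TA)
    also have "(\<integral>\<^sup>+x. (\<integral>\<^sup>+s. indicator {norm x<..} s * ennreal (s * exp (- s\<^sup>2/2)) \<partial>lborel) * g x \<partial>lborel) =
          (\<integral>\<^sup>+x. ennreal (exp (- (norm x)\<^sup>2/2) * (V \<bullet> x)^(2*m)) \<partial>lborel)"
    proof (rule nn_integral_cong)
      fix x :: 'a
      have "norm x ^ (2*m) * (V \<bullet> (x /\<^sub>R norm x))^(2*m) = (V \<bullet> x)^(2*m)"
        by (cases "x = 0") (simp_all add: power_mult_distrib[symmetric] mult.assoc[symmetric])
      then show "(\<integral>\<^sup>+s. indicator {norm x<..} s * ennreal (s * exp (- s\<^sup>2/2)) \<partial>lborel) * g x =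
                 ennreal (exp (- (norm x)\<^sup>2/2) * (V \<bullet> x)^(2*m))"
        unfolding phiA[OF norm_ge_zero] g_def g0_def
        by (simp add: ennreal_mult'[symmetric] zero_le_even_power mult.assoc)
    qed
    also have "\<dots> = ennreal ((2*pi) powr (real DIM('a)/2) * (fact (2*m) / (2^m * fact m)))"
      by (rule gauss_moment_euclid[OF V])
    finally show ?thesis by simp
  qed
  have LB: "(\<integral>\<^sup>+x. ennreal (if norm x \<le> 1 then 1 - norm x^(2*m) else 0) * g0 x \<partial>lborel) =
            ennreal (real (2*m) / real (2*m + DIM('a))) * G1"
  proof -
    have "(\<integral>\<^sup>+x. (\<integral>\<^sup>+s. indicator {norm x<..} s * (indicator {..1} s * ennreal (real (2*m) * s^(2*m-1))) \<partial>lborel) * g0 x \<partial>lborel) =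
          (\<integral>\<^sup>+s. indicator {0<..} s * (indicator {..1} s * ennreal (real (2*m) * s^(2*m-1))) * ennreal (s ^ (DIM('a) + 0)) \<partial>lborel) * G1"
      unfolding G1_def by (rule layer_cake[OF g0m _ hom0]) measurable
    then show ?thesis by (simp only: phiB[OF norm_ge_zero] TB)
  qed
  have split: "indicator (ball 0 1) x * g0 x = indicator (ball 0 1) x * g x + ennreal (if norm x \<le> 1 then 1 - norm x^(2*m) else 0) * g0 x" for x :: 'a
  proof (cases "norm x < 1")
    case True
    have "norm x ^ (2*m) \<le> 1" using True by (intro power_le_one) auto
    then have "ennreal (norm x ^ (2*m)) + ennreal (1 - norm x ^ (2*m)) = 1"
      by (subst ennreal_plus[symmetric]) auto
    then have "g0 x = ennreal (norm x ^ (2*m)) * g0 x + ennreal (1 - norm x ^ (2*m)) * g0 x"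
      by (metis distrib_right mult_1)
    then show ?thesis using True by (simp add: indicator_def g_def dist_norm)
  next
    case False
    then show ?thesis by (cases "norm x = 1") (auto simp: indicator_def dist_norm)
  qed
  have G1eq: "G1 = B + ennreal (real (2*m) / real (2*m + DIM('a))) * G1"
  proof -
    have "G1 = (\<integral>\<^sup>+x. indicator (ball 0 1) x * g x + ennreal (if norm x \<le> 1 then 1 - norm x^(2*m) else 0) * g0 x \<partial>lborel)"
      unfolding G1_def split ..
    also have "\<dots> = B + (\<integral>\<^sup>+x. ennreal (if norm x \<le> 1 then 1 - norm x^(2*m) else 0) * g0 x \<partial>lborel)"
      unfolding B_def by (rule nn_integral_add) measurable
    finally show ?thesis unfolding LB .
  qed
  obtain g1 where g1: "G1 = ennreal g1" "g1 \<ge> 0" using G1fin by (cases G1) auto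
  have "B \<le> G1" using G1eq by (metis le_iff_add)
  then obtain b where b: "B = ennreal b" "b \<ge> 0" using G1fin
    by (cases B) (auto simp: top_unique)
  have tv0: "0 \<le> 2 powr (real m + real DIM('a)/2) * Gamma (real m + real DIM('a)/2 + 1)"
    by (intro mult_nonneg_nonneg Gamma_real_nonneg) auto
  have e1: "(2*pi) powr (real DIM('a)/2) * (fact (2*m) / (2^m * fact m)) = 2 powr (real m + real DIM('a)/2) * Gamma (real m + real DIM('a)/2 + 1) * b"
    using LA unfolding b(1) using tv0 b(2)
    by (simp add: ennreal_mult'[symmetric] ennreal_inj)
  have e2: "g1 = b + real (2*m) / real (2*m + DIM('a)) * g1"
    using G1eq unfolding g1(1) b(1) using g1(2) b(2)
    by (simp add: ennreal_mult'[symmetric] ennreal_plus[symmetric] del: ennreal_plus)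
  have "real DIM('a) * g1 = 2 * pi powr (real DIM('a)/2) * fact (2*m) / (4^m * fact m * Gamma (real m + real DIM('a)/2))"
    by (rule sphere_moment_algebra[OF _ refl refl e1 e2]) simp
  then show ?thesis unfolding cone g1(1)
    by (simp add: ennreal_of_nat_eq_real_of_nat ennreal_mult'[symmetric])
qed


lemma nn_integral_reflect_euclid:
  fixes f :: "'a::euclidean_space \<Rightarrow> ennreal"
  assumes f[measurable]: "f \<in> borel_measurable borel"
  shows "(\<integral>\<^sup>+x. f x \<partial>lborel) = (\<integral>\<^sup>+x. f (- x) \<partial>lborel)"
proof -
  have "(\<integral>\<^sup>+x. f x \<partial>lborel) = (\<integral>\<^sup>+x. f x \<partial>(density (distr lborel borel (\<lambda>x. 0 + (-1) *\<^sub>R x)) (\<lambda>_. ennreal (\<bar>-1\<bar>^DIM('a)))))"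
    by (rule arg_cong[where f="\<lambda>M. \<integral>\<^sup>+x. f x \<partial>M"]) (rule lborel_affine, simp)
  also have "\<dots> = (\<integral>\<^sup>+x. f (- x) \<partial>lborel)"
    by (simp add: nn_integral_density nn_integral_distr)
  finally show ?thesis .
qed

lemma sphere_reflect:
  fixes h :: "real \<Rightarrow> real" and V :: "'a::euclidean_space"
  assumes [measurable]: "h \<in> borel_measurable borel"
  shows "(\<integral>\<^sup>+\<theta>. ennreal (h (V \<bullet> \<theta>)) \<partial>(sphere_surface::'a measure)) = (\<integral>\<^sup>+\<theta>. ennreal (h (- (V \<bullet> \<theta>))) \<partial>sphere_surface)"
proof -
  have [measurable]: "ball (0::'a) 1 \<in> sets borel" by simp
  have "(\<integral>\<^sup>+\<theta>. ennreal (h (V \<bullet> \<theta>)) \<partial>(sphere_surface::'a measure)) =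
        of_nat DIM('a) * (\<integral>\<^sup>+x. indicator (ball 0 1 - {0}) x * ennreal (h (V \<bullet> (x /\<^sub>R norm x))) \<partial>lborel)"
    by (rule nn_integral_sphere_surface) measurable
  also have "(\<integral>\<^sup>+x. indicator (ball 0 1 - {0}) x * ennreal (h (V \<bullet> (x /\<^sub>R norm x))) \<partial>lborel) =
             (\<integral>\<^sup>+x. indicator (ball 0 1 - {0}) (-x) * ennreal (h (V \<bullet> ((-x) /\<^sub>R norm (-x)))) \<partial>lborel)"
    by (rule nn_integral_reflect_euclid) measurable
  also have "\<dots> = (\<integral>\<^sup>+x. indicator (ball 0 1 - {0}) x * ennreal (h (- (V \<bullet> (x /\<^sub>R norm x)))) \<partial>lborel)"
    by (rule nn_integral_cong) (simp add: indicator_def)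
  also have "of_nat DIM('a) * \<dots> = (\<integral>\<^sup>+\<theta>. ennreal (h (- (V \<bullet> \<theta>))) \<partial>sphere_surface)"
    by (rule nn_integral_sphere_surface[symmetric]) measurable
  finally show ?thesis .
qed

lemma cosh_even_sums: "(\<lambda>m. x^(2*m) / fact (2*m)) sums cosh (x::real)"
proof -
  have "(\<lambda>m. (\<lambda>n. if even n then x ^ n /\<^sub>R fact n else 0) (2*m)) sums cosh x"
    by (subst sums_mono_reindex) (auto simp: strict_mono_def intro: cosh_converges elim!: oddE)
  then show ?thesis by (simp add: divide_inverse mult.commute)
qed

lemma sphere_cosh:
  fixes V :: "'a::euclidean_space"
  shows "(\<integral>\<^sup>+\<theta>. ennreal (exp (k * (V \<bullet> \<theta>))) \<partial>(sphere_surface::'a measure)) =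
         (\<integral>\<^sup>+\<theta>. ennreal (cosh (k * (V \<bullet> \<theta>))) \<partial>sphere_surface)"
proof -
  let ?J = "(\<integral>\<^sup>+\<theta>. ennreal (exp (k * (V \<bullet> \<theta>))) \<partial>(sphere_surface::'a measure))"
  have rfl: "?J = (\<integral>\<^sup>+\<theta>. ennreal (exp (- (k * (V \<bullet> \<theta>)))) \<partial>(sphere_surface::'a measure))"
    using sphere_reflect[of "\<lambda>t. exp (k * t)" V] by simp
  have sm[measurable]: "(\<lambda>\<theta>::'a. V \<bullet> \<theta>) \<in> borel_measurable sphere_surface"
    by (subst measurable_cong_sets[OF sphere_surface_sets refl]) (intro measurable_restrict_space1, simp)
  have "(\<integral>\<^sup>+\<theta>. ennreal (cosh (k * (V \<bullet> \<theta>))) \<partial>(sphere_surface::'a measure)) =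
        (\<integral>\<^sup>+\<theta>. ennreal (1/2) * ennreal (exp (k * (V \<bullet> \<theta>))) + ennreal (1/2) * ennreal (exp (- (k * (V \<bullet> \<theta>)))) \<partial>sphere_surface)"
  proof (rule nn_integral_cong)
    fix x :: 'a
    have c: "cosh y = 1/2 * exp y + 1/2 * exp (- y)" for y :: real
      by (simp add: cosh_def scaleR_conv_of_real field_simps)
    show "ennreal (cosh (k * (V \<bullet> x))) = ennreal (1/2) * ennreal (exp (k * (V \<bullet> x))) + ennreal (1/2) * ennreal (exp (- (k * (V \<bullet> x))))"
      unfolding c
      using ennreal_mult[of "1/2" "exp (k*(V \<bullet> x))"] ennreal_mult[of "1/2" "exp (-(k*(V \<bullet> x)))"]
        ennreal_plus[of "1/2 * exp (k*(V \<bullet> x))" "1/2 * exp (-(k*(V \<bullet> x)))"]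
      by simp
  qed
  also have "\<dots> = ennreal (1/2) * ?J + ennreal (1/2) * ?J"
    unfolding rfl[symmetric]
    by (subst nn_integral_add) (auto simp: nn_integral_cmult rfl[symmetric])
  also have "\<dots> = (ennreal (1/2) + ennreal (1/2)) * ?J" by (simp only: distrib_right)
  also have "ennreal (1/2) + ennreal (1/2) = 1"
    by (subst ennreal_plus[symmetric]) auto
  also have "1 * ?J = ?J" by simp
  finally show ?thesis ..
qed


lemma sphere_surface_measurable_fun[measurable]:
  "(\<lambda>\<theta>::'a::euclidean_space. V \<bullet> \<theta>) \<in> borel_measurable sphere_surface"
  by (subst measurable_cong_sets[OF sphere_surface_sets refl]) (intro measurable_restrict_space1, simp)

lemma sphere_exp_series:
  fixes V :: "'a::euclidean_space"
  assumes V: "norm V = 1"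
  shows "(\<integral>\<^sup>+\<theta>. ennreal (exp (k * (V \<bullet> \<theta>))) \<partial>(sphere_surface::'a measure)) =
    (\<Sum>m. ennreal (2 * pi powr (real DIM('a)/2) * ((k/2)^(2*m) / (fact m * Gamma (real m + real DIM('a)/2)))))"
proof -
  have "(\<integral>\<^sup>+\<theta>. ennreal (exp (k * (V \<bullet> \<theta>))) \<partial>(sphere_surface::'a measure)) =
        (\<integral>\<^sup>+\<theta>. ennreal (cosh (k * (V \<bullet> \<theta>))) \<partial>(sphere_surface::'a measure))"
    by (rule sphere_cosh)
  also have "\<dots> = (\<integral>\<^sup>+\<theta>. (\<Sum>m. ennreal (k^(2*m) / fact (2*m)) * ennreal ((V \<bullet> \<theta>)^(2*m))) \<partial>(sphere_surface::'a measure))"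
  proof (rule nn_integral_cong)
    fix \<theta> :: 'a
    have nn: "0 \<le> (k * (V \<bullet> \<theta>))^(2*m) / fact (2*m)" for m by (simp add: zero_le_even_power)
    have "ennreal (cosh (k * (V \<bullet> \<theta>))) = (\<Sum>m. ennreal ((k * (V \<bullet> \<theta>))^(2*m) / fact (2*m)))"
      using cosh_even_sums[of "k * (V \<bullet> \<theta>)"] nn by (simp add: suminf_ennreal2 sums_iff)
    also have "\<dots> = (\<Sum>m. ennreal (k^(2*m) / fact (2*m)) * ennreal ((V \<bullet> \<theta>)^(2*m)))"
      by (rule suminf_cong) (simp add: ennreal_mult'[symmetric] zero_le_even_power power_mult_distrib)
    finally show "ennreal (cosh (k * (V \<bullet> \<theta>))) = (\<Sum>m. ennreal (k^(2*m) / fact (2*m)) * ennreal ((V \<bullet> \<theta>)^(2*m)))" .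
  qed
  also have "\<dots> = (\<Sum>m. (\<integral>\<^sup>+\<theta>. ennreal (k^(2*m) / fact (2*m)) * ennreal ((V \<bullet> \<theta>)^(2*m)) \<partial>(sphere_surface::'a measure)))"
    by (rule nn_integral_suminf) measurable
  also have "\<dots> = (\<Sum>m. ennreal (2 * pi powr (real DIM('a)/2) * ((k/2)^(2*m) / (fact m * Gamma (real m + real DIM('a)/2)))))"
  proof (rule suminf_cong)
    fix m
    have "0 < real DIM('a)" by simp
    then have G: "Gamma (real m + real DIM('a)/2) > 0" by (intro Gamma_real_pos) linarith
    have "(\<integral>\<^sup>+\<theta>. ennreal (k^(2*m) / fact (2*m)) * ennreal ((V \<bullet> \<theta>)^(2*m)) \<partial>(sphere_surface::'a measure)) =
          ennreal (k^(2*m) / fact (2*m)) * ennreal (2 * pi powr (real DIM('a)/2) * fact (2*m) / (4^m * fact m * Gamma (real m + real DIM('a)/2)))"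
      by (subst nn_integral_cmult) (simp_all add: sphere_moment[OF V])
    also have "\<dots> = ennreal (k^(2*m) / fact (2*m) * (2 * pi powr (real DIM('a)/2) * fact (2*m) / (4^m * fact m * Gamma (real m + real DIM('a)/2))))"
      using G by (subst ennreal_mult'[symmetric]) (simp_all add: zero_le_even_power)
    also have "k^(2*m) / fact (2*m) * (2 * pi powr (real DIM('a)/2) * fact (2*m) / (4^m * fact m * Gamma (real m + real DIM('a)/2)))
             = 2 * pi powr (real DIM('a)/2) * ((k/2)^(2*m) / (fact m * Gamma (real m + real DIM('a)/2)))"
    proof -
      have "(k/2)^(2*m) = k^(2*m) / 4^m" by (simp add: power_divide power_mult)
      moreover have "(2::real)^(m*2) = 4^m" by (simp add: power_mult_distrib[symmetric] mult.commute[of m] power_mult)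
      ultimately show ?thesis using G by (simp add: field_simps)
    qed
    finally show "(\<integral>\<^sup>+\<theta>. ennreal (k^(2*m) / fact (2*m)) * ennreal ((V \<bullet> \<theta>)^(2*m)) \<partial>(sphere_surface::'a measure)) =
        ennreal (2 * pi powr (real DIM('a)/2) * ((k/2)^(2*m) / (fact m * Gamma (real m + real DIM('a)/2))))" .
  qed
  finally show ?thesis .
qed

lemma sphere_surface_total:
  fixes V :: "'a::euclidean_space"
  assumes V: "norm V = 1"
  shows "emeasure (sphere_surface::'a measure) (sphere 0 1) = ennreal (2 * pi powr (real DIM('a)/2) / Gamma (real DIM('a)/2))"
proof -
  have "emeasure (sphere_surface::'a measure) (sphere 0 1) = (\<integral>\<^sup>+\<theta>. ennreal ((V \<bullet> \<theta>)^(2*0)) \<partial>(sphere_surface::'a measure))"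
    by (simp add: sphere_surface_space[symmetric])
  also have "\<dots> = ennreal (2 * pi powr (real DIM('a)/2) / Gamma (real DIM('a)/2))"
    by (subst sphere_moment[OF V]) simp
  finally show ?thesis .
qed

lemma vMF_normalization:
  fixes V :: "'a::euclidean_space"
  assumes V: "norm V = 1" and k: "k > 0"
  shows "(\<integral>\<^sup>+\<theta>. ennreal (exp (k * (V \<bullet> \<theta>))) \<partial>(sphere_surface::'a measure)) = ennreal (1 / vMF_const DIM('a) k)"
    and "vMF_const DIM('a) k > 0"
proof -
  define d where "d = DIM('a)"
  have d0: "real d > 0" by (simp add: d_def)
  define a where "a m = (k/2)^(2*m) / (fact m * Gamma (real m + real d/2))" for m
  define C where "C = 2 * pi powr (real d/2)"
  have C0: "C > 0" by (simp add: C_def)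
  have apos: "a m > 0" for m
  proof -
    have "Gamma (real m + real d/2) > 0" using d0 by (intro Gamma_real_pos) linarith
    then show ?thesis using k by (simp add: a_def)
  qed
  let ?J = "(\<integral>\<^sup>+\<theta>. ennreal (exp (k * (V \<bullet> \<theta>))) \<partial>(sphere_surface::'a measure))"
  have ser: "?J = (\<Sum>m. ennreal (C * a m))" using sphere_exp_series[OF V, of k] by (simp add: a_def C_def d_def)
  have Jfin: "?J < \<infinity>"
  proof -
    have "?J \<le> (\<integral>\<^sup>+\<theta>. ennreal (exp k) \<partial>(sphere_surface::'a measure))"
    proof (rule nn_integral_mono)
      fix \<theta> :: 'a assume "\<theta> \<in> space sphere_surface"
      then have "norm \<theta> = 1" by (simp add: sphere_surface_space)
      then have "V \<bullet> \<theta> \<le> 1" using Cauchy_Schwarz_ineq2[of V \<theta>] V by simp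
      then have "k * (V \<bullet> \<theta>) \<le> k" using k by (simp add: mult_left_le)
      then show "ennreal (exp (k * (V \<bullet> \<theta>))) \<le> ennreal (exp k)" by simp
    qed
    also have "\<dots> = ennreal (exp k) * emeasure (sphere_surface::'a measure) (sphere 0 1)"
      by (simp add: nn_integral_const sphere_surface_space)
    also have "\<dots> < \<infinity>" by (simp add: sphere_surface_total[OF V] ennreal_mult_less_top)
    finally show ?thesis .
  qed
  have summ: "summable (\<lambda>m. C * a m)"
    by (rule summable_suminf_not_top) (use C0 apos ser Jfin in \<open>auto intro: less_imp_le\<close>)
  have summa: "summable a" using summ C0 by (simp add: summable_cmult_iff)
  have J: "?J = ennreal (C * suminf a)"
    unfolding ser using summ C0 apos by (subst suminf_ennreal2) (auto simp: suminf_mult intro: less_imp_le)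
  have S: "suminf a > 0" by (rule suminf_pos[OF summa apos])
  have bes: "bessel_I (real d/2 - 1) k = suminf a * (k/2) powr (real d/2 - 1)"
  proof -
    have "(\<lambda>m. (k/2) powr (2 * real m + (real d/2 - 1)) / (fact m * Gamma (real m + (real d/2 - 1) + 1))) =
          (\<lambda>m. a m * (k/2) powr (real d/2 - 1))"
    proof
      fix m
      have "(k/2) powr (2 * real m + (real d/2 - 1)) = (k/2)^(2*m) * (k/2) powr (real d/2 - 1)"
        using k by (simp add: powr_add powr_realpow[symmetric])
      moreover have "real m + (real d/2 - 1) + 1 = real m + real d/2" by simp
      ultimately show "(k/2) powr (2 * real m + (real d/2 - 1)) / (fact m * Gamma (real m + (real d/2 - 1) + 1)) = a m * (k/2) powr (real d/2 - 1)"
        by (simp add: a_def)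
    qed
    then show ?thesis unfolding bessel_I_def by (simp add: suminf_mult2[OF summa])
  qed
  have vm: "vMF_const d k = k powr (real d/2 - 1) / ((2*pi) powr (real d/2) * (suminf a * (k/2) powr (real d/2 - 1)))"
    unfolding vMF_const_def bes ..
  have p1: "(k/2) powr (real d/2 - 1) = k powr (real d/2 - 1) / 2 powr (real d/2 - 1)" using k by (simp add: powr_divide)
  have p2: "(2*pi) powr (real d/2) = 2 powr (real d/2) * pi powr (real d/2)" by (rule powr_mult)
  have p3: "2 powr (real d/2) = 2 * 2 powr (real d/2 - 1)" by (simp add: powr_diff)
  have kp: "k powr (real d/2 - 1) > 0" using k by simp
  have vm2: "vMF_const d k = 1 / (C * suminf a)"
    unfolding vm p1 p2 p3 C_def using kp S by (simp add: field_simps)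
  show "vMF_const DIM('a) k > 0" using vm2 C0 S by (simp add: d_def)
  show "?J = ennreal (1 / vMF_const DIM('a) k)" unfolding J using vm2 by (simp add: d_def)
qed


lemma integrable_bdd:
  fixes f :: "'a \<Rightarrow> real"
  assumes "prob_space M" "f \<in> borel_measurable M" "\<And>x. x \<in> space M \<Longrightarrow> \<bar>f x\<bar> \<le> B"
  shows "integrable M f"
proof -
  interpret prob_space M by fact
  show ?thesis by (rule integrable_const_bound[where B=B]) (use assms in auto)
qed

lemma PiM_expect_one:
  fixes f :: "'a \<Rightarrow> real"
  assumes U: "prob_space U" and f[measurable]: "f \<in> borel_measurable U" and i: "i \<in> I"
  shows "(\<integral>X. f (X i) \<partial>PiM I (\<lambda>_. U)) = (\<integral>x. f x \<partial>U)"
proof -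
  have "(\<integral>X. f (X i) \<partial>PiM I (\<lambda>_. U)) = (\<integral>x. f x \<partial>distr (PiM I (\<lambda>_. U)) U (\<lambda>X. X i))"
    by (rule integral_distr[symmetric]) (use i in simp_all)
  also have "distr (PiM I (\<lambda>_. U)) U (\<lambda>X. X i) = U"
    using distr_PiM_component[of I "\<lambda>_. U" i] U i by simp
  finally show ?thesis .
qed

lemma PiM_expect_two:
  fixes f g :: "'a \<Rightarrow> real"
  assumes U: "prob_space U" and f: "integrable U f" and g: "integrable U g"
    and I: "finite I" "i \<in> I" "j \<in> I" "i \<noteq> j"
  shows "(\<integral>X. f (X i) * g (X j) \<partial>PiM I (\<lambda>_. U)) = (\<integral>x. f x \<partial>U) * (\<integral>x. g x \<partial>U)"
proof -
  interpret U: prob_space U by fact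
  have psf: "product_sigma_finite (\<lambda>_::'i. U)"
    unfolding product_sigma_finite_def using prob_space_imp_sigma_finite[OF U] by simp
  define F where "F k = (if k = i then f else if k = j then g else (\<lambda>_. 1))" for k
  have intF: "integrable U (F k)" for k using f g by (simp add: F_def)
  have "(\<integral>X. (\<Prod>k\<in>I. F k (X k)) \<partial>PiM I (\<lambda>_. U)) = (\<Prod>k\<in>I. (\<integral>x. F k x \<partial>U))"
    by (rule product_sigma_finite.product_integral_prod[OF psf I(1)]) (rule intF)
  moreover have "(\<Prod>k\<in>I. F k (X k)) = f (X i) * g (X j)" for X
  proof -
    have "(\<Prod>k\<in>I. F k (X k)) = (\<Prod>k\<in>{i,j}. F k (X k))"
      by (rule prod.mono_neutral_right) (use I in \<open>auto simp: F_def\<close>)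
    then show ?thesis using I(4) by (simp add: F_def)
  qed
  moreover have "(\<Prod>k\<in>I. (\<integral>x. F k x \<partial>U)) = (\<integral>x. f x \<partial>U) * (\<integral>x. g x \<partial>U)"
  proof -
    have "(\<Prod>k\<in>I. (\<integral>x. F k x \<partial>U)) = (\<Prod>k\<in>{i,j}. (\<integral>x. F k x \<partial>U))"
      by (rule prod.mono_neutral_right) (use I in \<open>auto simp: F_def U.prob_space\<close>)
    then show ?thesis using I(4) by (simp add: F_def)
  qed
  ultimately show ?thesis by simp
qed

lemma alg_id:
  fixes a S N :: real
  assumes "a + S > 0" "N > 0"
  shows "a / (a + S) - a / N = - a / N\<^sup>2 * (a + (S - N)) + a * (a + (S - N))\<^sup>2 / (N\<^sup>2 * (a + S))"
proof -
  define t where "t = a + S"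
  have t: "t \<noteq> 0" "N \<noteq> 0" using assms by (auto simp: t_def)
  have e: "a + (S - N) = t - N" by (simp add: t_def)
  have "- a / N\<^sup>2 * (t - N) + a * (t - N)\<^sup>2 / (N\<^sup>2 * t) = a / t - a / N"
    using t by (simp add: field_simps power2_eq_square)
  then show ?thesis unfolding e t_def[symmetric] by simp
qed

lemma fin_ineq:
  fixes a mu lo hi x :: real and n :: nat
  assumes "0 < a" "0 < mu" "0 < lo" "1 \<le> n"
    and x: "\<bar>x\<bar> \<le> a\<^sup>2 / (real n * mu)\<^sup>2 + a * (a\<^sup>2 + real n * hi\<^sup>2) / ((real n * mu)\<^sup>2 * (real n * lo))"
  shows "\<bar>x\<bar> \<le> (a\<^sup>2 / mu\<^sup>2 + a * (a\<^sup>2 + hi\<^sup>2) / (mu\<^sup>2 * lo)) / (real n)\<^sup>2"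
proof -
  have n1: "real n \<ge> 1" using assms by simp
  have e1: "a\<^sup>2 / (real n * mu)\<^sup>2 = (a\<^sup>2 / mu\<^sup>2) / (real n)\<^sup>2" by (simp add: power_mult_distrib)
  have "a * (a\<^sup>2 + real n * hi\<^sup>2) / ((real n * mu)\<^sup>2 * (real n * lo)) \<le> a * (real n * a\<^sup>2 + real n * hi\<^sup>2) / ((real n * mu)\<^sup>2 * (real n * lo))"
    using assms n1 by (intro divide_right_mono mult_left_mono add_right_mono) (auto intro: mult_le_cancel_right1[THEN iffD2])
  also have "\<dots> = (a * (a\<^sup>2 + hi\<^sup>2) / (mu\<^sup>2 * lo)) / (real n)\<^sup>2"
    using assms n1 by (simp add: field_simps power2_eq_square)
  finally show ?thesis using x e1 by (simp add: add_divide_distrib)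
qed

lemma main_bound:
  fixes Y :: "'a \<Rightarrow> real"
  assumes U: "prob_space U" and Ym[measurable]: "Y \<in> borel_measurable U"
    and lo: "0 < lo" and bnd: "\<And>x. x \<in> space U \<Longrightarrow> lo \<le> Y x \<and> Y x \<le> hi" and a: "0 < a" and n: "1 \<le> n"
  shows "\<bar>(\<integral>X. a / (a + (\<Sum>i<n. Y (X i))) \<partial>PiM {..<n} (\<lambda>_. U)) - a / (real n * (\<integral>x. Y x \<partial>U))\<bar>
          \<le> (a\<^sup>2 / (\<integral>x. Y x \<partial>U)\<^sup>2 + a * (a\<^sup>2 + hi\<^sup>2) / ((\<integral>x. Y x \<partial>U)\<^sup>2 * lo)) / (real n)\<^sup>2"
proof -
  interpret U: prob_space U by fact
  define P where "P = PiM {..<n} (\<lambda>_. U)"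
  have Pp: "prob_space P" unfolding P_def by (rule prob_space_PiM) (rule U)
  interpret P: prob_space P by (rule Pp)
  define mu where "mu = (\<integral>x. Y x \<partial>U)"
  have Yb: "\<bar>Y x\<bar> \<le> hi" if "x \<in> space U" for x using bnd[OF that] lo by auto
  have intY: "integrable U Y" by (rule integrable_bdd[OF U Ym Yb])
  have mub: "lo \<le> mu" "mu \<le> hi"
    unfolding mu_def using bnd by (auto intro!: U.integral_ge_const U.integral_le_const intY)
  have mu0: "mu > 0" using mub lo by simp
  have hi0: "0 \<le> hi" using mub lo by simp
  have spP: "X i \<in> space U" if "X \<in> space P" "i < n" for X i
    using that by (auto simp: P_def space_PiM)
  have mY[measurable]: "(\<lambda>X. Y (X i)) \<in> borel_measurable P" if "i < n" for i
    unfolding P_def by (rule measurable_compose[OF measurable_component_singleton[of i "{..<n}" "\<lambda>_. U"] Ym]) (use that in simp)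
  define N where "N = real n * mu"
  have N0: "N > 0" using mu0 n by (simp add: N_def)
  define S where "S X = (\<Sum>i<n. Y (X i))" for X
  define D where "D X = S X - N" for X
  have mS[measurable]: "S \<in> borel_measurable P" unfolding S_def by (rule borel_measurable_sum) (simp add: mY)
  have mD[measurable]: "D \<in> borel_measurable P" unfolding D_def by measurable
  have Sb: "real n * lo \<le> S X" "S X \<le> real n * hi" if "X \<in> space P" for X
  proof -
    have "(\<Sum>i<n. lo) \<le> S X" unfolding S_def by (rule sum_mono) (use bnd spP[OF that] in auto)
    then show "real n * lo \<le> S X" by simp
    have "S X \<le> (\<Sum>i<n. hi)" unfolding S_def by (rule sum_mono) (use bnd spP[OF that] in auto)
    then show "S X \<le> real n * hi" by simp
  qed
  have Db: "\<bar>D X\<bar> \<le> real n * hi" if "X \<in> space P" for X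
  proof -
    have "real n * lo \<le> N" "N \<le> real n * hi" using mub by (auto simp: N_def intro: mult_left_mono)
    moreover have "0 \<le> real n * lo" using lo by simp
    ultimately show ?thesis using Sb[OF that] by (auto simp: D_def abs_le_iff)
  qed
  have intD: "integrable P D" by (rule integrable_bdd[OF Pp mD Db])
  have intYi: "integrable P (\<lambda>X. Y (X i))" if "i < n" for i
    by (rule integrable_bdd[OF Pp mY[OF that]]) (use Yb spP that in auto)
  have intS: "integrable P S" unfolding S_def by (rule Bochner_Integration.integrable_sum) (simp add: intYi)
  have ED: "(\<integral>X. D X \<partial>P) = 0"
  proof -
    have "(\<integral>X. D X \<partial>P) = (\<integral>X. S X \<partial>P) - N"
      unfolding D_def by (subst Bochner_Integration.integral_diff) (auto simp: intS P.prob_space)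
    also have "(\<integral>X. S X \<partial>P) = (\<Sum>i<n. (\<integral>X. Y (X i) \<partial>P))"
      unfolding S_def by (rule Bochner_Integration.integral_sum) (simp add: intYi)
    also have "\<dots> = (\<Sum>i<n. mu)"
      by (rule sum.cong) (auto simp: P_def mu_def PiM_expect_one[OF U Ym])
    finally show ?thesis by (simp add: N_def)
  qed
  define Z where "Z i X = Y (X i) - mu" for i :: nat and X :: "nat \<Rightarrow> 'a"
  have intZ: "integrable P (Z i)" if "i < n" for i
    unfolding Z_def using intYi[OF that] by simp
  have Zb: "\<bar>Z i X\<bar> \<le> hi" if "X \<in> space P" "i < n" for i X
    using bnd[OF spP[OF that]] mub lo by (auto simp: Z_def abs_le_iff)
  have intZZ: "integrable P (\<lambda>X. Z i X * Z j X)" if "i < n" "j < n" for i j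
    by (rule integrable_bdd[OF Pp, of _ "hi * hi"]) (use that Zb hi0 in \<open>auto simp: Z_def abs_mult intro!: mult_mono\<close>)
  have EZZ: "(\<integral>X. Z i X * Z j X \<partial>P) = 0" if "i < n" "j < n" "i \<noteq> j" for i j
  proof -
    have "(\<integral>X. Z i X * Z j X \<partial>P) = (\<integral>x. Y x - mu \<partial>U) * (\<integral>x. Y x - mu \<partial>U)"
      unfolding Z_def P_def by (rule PiM_expect_two[OF U]) (use that intY in auto)
    also have "(\<integral>x. Y x - mu \<partial>U) = 0" using intY by (simp add: mu_def U.prob_space)
    finally show ?thesis by simp
  qed
  have EZ2: "(\<integral>X. Z i X * Z i X \<partial>P) \<le> hi\<^sup>2" if "i < n" for i
  proof -
    have "(\<integral>X. Z i X * Z i X \<partial>P) \<le> (\<integral>X. hi\<^sup>2 \<partial>P)"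
    proof (rule integral_mono)
      show "integrable P (\<lambda>X. Z i X * Z i X)" by (rule intZZ[OF that that])
      show "integrable P (\<lambda>X. hi\<^sup>2)" by simp
      fix X assume "X \<in> space P"
      from Zb[OF this that] have "\<bar>Z i X\<bar>\<^sup>2 \<le> hi\<^sup>2" by (intro power_mono) auto
      then show "Z i X * Z i X \<le> hi\<^sup>2" by (simp add: power2_eq_square)
    qed
    then show ?thesis by (simp add: P.prob_space)
  qed
  have DZ: "D X = (\<Sum>i<n. Z i X)" for X by (simp add: D_def S_def Z_def N_def sum_subtractf)
  have ED2: "(\<integral>X. (D X)\<^sup>2 \<partial>P) \<le> real n * hi\<^sup>2"
  proof -
    have "(\<integral>X. (D X)\<^sup>2 \<partial>P) = (\<integral>X. (\<Sum>i<n. \<Sum>j<n. Z i X * Z j X) \<partial>P)"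
      unfolding DZ by (simp add: power2_eq_square sum_product)
    also have "\<dots> = (\<Sum>i<n. (\<integral>X. (\<Sum>j<n. Z i X * Z j X) \<partial>P))"
      by (rule Bochner_Integration.integral_sum) (auto intro!: Bochner_Integration.integrable_sum intZZ)
    also have "\<dots> = (\<Sum>i<n. \<Sum>j<n. (\<integral>X. Z i X * Z j X \<partial>P))"
      by (rule sum.cong[OF refl], rule Bochner_Integration.integral_sum) (auto intro!: intZZ)
    also have "\<dots> = (\<Sum>i<n. (\<integral>X. Z i X * Z i X \<partial>P))"
    proof (rule sum.cong[OF refl])
      fix i assume i: "i \<in> {..<n}"
      have "(\<Sum>j<n. (\<integral>X. Z i X * Z j X \<partial>P)) = (\<Sum>j\<in>{i}. (\<integral>X. Z i X * Z j X \<partial>P))"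
        by (rule sum.mono_neutral_right) (use i EZZ in auto)
      then show "(\<Sum>j<n. (\<integral>X. Z i X * Z j X \<partial>P)) = (\<integral>X. Z i X * Z i X \<partial>P)" by simp
    qed
    also have "\<dots> \<le> (\<Sum>i<n. hi\<^sup>2)" by (rule sum_mono) (use EZ2 in auto)
    finally show ?thesis by simp
  qed
  define R where "R X = a * (a + D X)\<^sup>2 / (N\<^sup>2 * (a + S X))" for X
  have SP: "a + S X > 0" if "X \<in> space P" for X using Sb[OF that] lo a by (smt (verit) mult_nonneg_nonneg of_nat_0_le_iff)
  have decomp: "a / (a + S X) - a / N = - a / N\<^sup>2 * (a + D X) + R X" if "X \<in> space P" for X
    unfolding R_def D_def using alg_id[OF SP[OF that] N0] .
  have Rb: "0 \<le> R X" "R X \<le> a / (N\<^sup>2 * (real n * lo)) * (a + D X)\<^sup>2" if "X \<in> space P" for X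
  proof -
    show "0 \<le> R X" unfolding R_def using SP[OF that] a by simp
    have "a * (a + D X)\<^sup>2 / (N\<^sup>2 * (a + S X)) \<le> a * (a + D X)\<^sup>2 / (N\<^sup>2 * (real n * lo))"
      using Sb[OF that] SP[OF that] a N0 lo n
      by (intro divide_left_mono mult_left_mono mult_pos_pos) auto
    then show "R X \<le> a / (N\<^sup>2 * (real n * lo)) * (a + D X)\<^sup>2" unfolding R_def by simp
  qed
  have mR[measurable]: "R \<in> borel_measurable P" unfolding R_def by measurable
  have ADb: "\<bar>(a + D X)\<^sup>2\<bar> \<le> (a + real n * hi)\<^sup>2" if "X \<in> space P" for X
  proof -
    have "\<bar>a + D X\<bar> \<le> a + real n * hi" using Db[OF that] a by (auto simp: abs_le_iff)
    then have "\<bar>a + D X\<bar>\<^sup>2 \<le> (a + real n * hi)\<^sup>2" by (intro power_mono) auto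
    then show ?thesis by simp
  qed
  have intAD2: "integrable P (\<lambda>X. (a + D X)\<^sup>2)"
    by (rule integrable_bdd[OF Pp, of _ "(a + real n * hi)\<^sup>2"]) (use ADb in auto)
  have intR: "integrable P R"
  proof (rule integrable_bdd[OF Pp mR, of "a / (N\<^sup>2 * (real n * lo)) * (a + real n * hi)\<^sup>2"])
    fix X assume X: "X \<in> space P"
    have c0: "0 \<le> a / (N\<^sup>2 * (real n * lo))" using a lo by simp
    have "R X \<le> a / (N\<^sup>2 * (real n * lo)) * (a + D X)\<^sup>2" by (rule Rb(2)[OF X])
    also have "\<dots> \<le> a / (N\<^sup>2 * (real n * lo)) * (a + real n * hi)\<^sup>2"
      using ADb[OF X] c0 by (intro mult_left_mono) auto
    finally show "\<bar>R X\<bar> \<le> a / (N\<^sup>2 * (real n * lo)) * (a + real n * hi)\<^sup>2" using Rb(1)[OF X] by simp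
  qed
  have intF: "integrable P (\<lambda>X. a / (a + S X))"
  proof (rule integrable_bdd[OF Pp, of _ "a / (a + real n * lo)"])
    show "(\<lambda>X. a / (a + S X)) \<in> borel_measurable P" by measurable
    fix X assume X: "X \<in> space P"
    have p: "0 < a + real n * lo" using a lo by (simp add: add_pos_nonneg)
    have "a / (a + S X) \<le> a / (a + real n * lo)"
      using Sb(1)[OF X] a p by (intro divide_left_mono) auto
    then show "\<bar>a / (a + S X)\<bar> \<le> a / (a + real n * lo)" using SP[OF X] a by simp
  qed
  have EAD2: "(\<integral>X. (a + D X)\<^sup>2 \<partial>P) = a\<^sup>2 + (\<integral>X. (D X)\<^sup>2 \<partial>P)"
  proof -
    have "(\<integral>X. (a + D X)\<^sup>2 \<partial>P) = (\<integral>X. a\<^sup>2 + 2 * a * D X + (D X)\<^sup>2 \<partial>P)"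
      by (simp add: power2_sum add_ac)
    also have "\<dots> = a\<^sup>2 + 2 * a * (\<integral>X. D X \<partial>P) + (\<integral>X. (D X)\<^sup>2 \<partial>P)"
    proof -
      have i2: "integrable P (\<lambda>X. (D X)\<^sup>2)"
        by (rule integrable_bdd[OF Pp, of _ "(real n * hi)\<^sup>2"]) (use Db in \<open>auto simp: abs_le_square_iff[symmetric] intro: order.trans[OF _ abs_ge_self]\<close>)
      show ?thesis using intD i2 by (simp add: P.prob_space)
    qed
    finally show ?thesis using ED by simp
  qed
  have ER: "0 \<le> (\<integral>X. R X \<partial>P)" "(\<integral>X. R X \<partial>P) \<le> a / (N\<^sup>2 * (real n * lo)) * (a\<^sup>2 + real n * hi\<^sup>2)"
  proof -
    show "0 \<le> (\<integral>X. R X \<partial>P)" by (rule integral_nonneg_AE) (use Rb in auto)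
    have "(\<integral>X. R X \<partial>P) \<le> (\<integral>X. a / (N\<^sup>2 * (real n * lo)) * (a + D X)\<^sup>2 \<partial>P)"
      by (rule integral_mono) (use intR intAD2 Rb in auto)
    also have "\<dots> = a / (N\<^sup>2 * (real n * lo)) * (a\<^sup>2 + (\<integral>X. (D X)\<^sup>2 \<partial>P))"
      by (simp add: EAD2)
    also have "\<dots> \<le> a / (N\<^sup>2 * (real n * lo)) * (a\<^sup>2 + real n * hi\<^sup>2)"
      using ED2 a N0 lo n by (intro mult_left_mono add_left_mono) auto
    finally show "(\<integral>X. R X \<partial>P) \<le> a / (N\<^sup>2 * (real n * lo)) * (a\<^sup>2 + real n * hi\<^sup>2)" .
  qed
  have main: "(\<integral>X. a / (a + S X) \<partial>P) - a / N = - a / N\<^sup>2 * a + (\<integral>X. R X \<partial>P)"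
  proof -
    have "(\<integral>X. a / (a + S X) \<partial>P) - a / N = (\<integral>X. a / (a + S X) - a / N \<partial>P)"
      using intF by (simp add: P.prob_space)
    also have "\<dots> = (\<integral>X. - a / N\<^sup>2 * (a + D X) + R X \<partial>P)"
      by (rule Bochner_Integration.integral_cong[OF refl]) (rule decomp)
    also have "\<dots> = - a / N\<^sup>2 * (a + (\<integral>X. D X \<partial>P)) + (\<integral>X. R X \<partial>P)"
      using intD intR by (simp add: P.prob_space)
    finally show ?thesis using ED by simp
  qed
  have "\<bar>(\<integral>X. a / (a + S X) \<partial>P) - a / N\<bar> \<le> a\<^sup>2 / N\<^sup>2 + a * (a\<^sup>2 + real n * hi\<^sup>2) / (N\<^sup>2 * (real n * lo))"
  proof -
    have t0: "0 \<le> a\<^sup>2 / N\<^sup>2" by simp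
    have eqa: "- a / N\<^sup>2 * a = - (a\<^sup>2 / N\<^sup>2)" by (simp add: power2_eq_square)
    have b2: "a / (N\<^sup>2 * (real n * lo)) * (a\<^sup>2 + real n * hi\<^sup>2) = a * (a\<^sup>2 + real n * hi\<^sup>2) / (N\<^sup>2 * (real n * lo))" by simp
    show ?thesis unfolding main eqa using ER b2 t0 by (simp only: abs_le_iff) linarith
  qed
  then have "\<bar>(\<integral>X. a / (a + S X) \<partial>P) - a / N\<bar> \<le> (a\<^sup>2 / mu\<^sup>2 + a * (a\<^sup>2 + hi\<^sup>2) / (mu\<^sup>2 * lo)) / (real n)\<^sup>2"
    by (intro fin_ineq[OF a mu0 lo n]) (simp add: N_def)
  then show ?thesis by (simp add: P_def S_def N_def mu_def)
qed


theorem proposition2: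
  fixes V A :: "real^'n" and \<kappa> :: real
  assumes "CARD('n) \<ge> 2"
    and "V \<in> sphere 0 1" and "A \<in> sphere 0 1"
    and "\<kappa> > 0"
  shows "(\<lambda>n. P_Bexp n V \<kappa> A - P_0 n V \<kappa> A) \<in> o(\<lambda>n. 1 / (real n * sqrt (real n)))"
proof -
  have V: "norm V = 1" using assms(2) by simp
  have k: "\<kappa> > 0" by (rule assms(4))
  let ?\<sigma> = "sphere_surface :: (real^'n) measure"
  let ?S = "sphere (0::real^'n) 1"
  define Ar where "Ar = 2 * pi powr (real DIM(real^'n)/2) / Gamma (real DIM(real^'n)/2)"
  have Ar0: "Ar > 0" unfolding Ar_def by (intro divide_pos_pos Gamma_real_pos) simp_all
  have emS: "emeasure ?\<sigma> ?S = ennreal Ar" unfolding Ar_def by (rule sphere_surface_total[OF V])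
  have area: "sphere_area TYPE(real^'n) = Ar"
    unfolding sphere_area_def using emS Ar0 by (simp add: measure_def)
  define U where "U = (sphere_uniform :: (real^'n) measure)"
  have U: "prob_space U" unfolding U_def sphere_uniform_def
    by (rule prob_space_uniform_measure) (use emS Ar0 in auto)
  have spU: "space U = ?S" by (simp add: U_def sphere_uniform_def sphere_surface_space)
  define Y where "Y x = exp (\<kappa> * (V \<bullet> x))" for x :: "real^'n"
  have Ymsig: "Y \<in> borel_measurable ?\<sigma>"
  proof -
    have "(\<lambda>x. V \<bullet> x) \<in> borel_measurable ?\<sigma>" by (rule sphere_surface_measurable_fun)
    then show ?thesis unfolding Y_def by measurable
  qed
  have Ym: "Y \<in> borel_measurable U"
    using Ymsig unfolding U_def sphere_uniform_def
    by (subst measurable_cong_sets[OF sets_uniform_measure refl])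
  have Ssets: "?S \<in> sets ?\<sigma>" using sets.top[of ?\<sigma>] by (simp add: sphere_surface_space)
  have Yb: "exp (- \<kappa>) \<le> Y x \<and> Y x \<le> exp \<kappa>" if "x \<in> space U" for x
  proof -
    have "norm x = 1" using that spU by simp
    then have "\<bar>V \<bullet> x\<bar> \<le> 1" using Cauchy_Schwarz_ineq2[of V x] V by simp
    then have "- \<kappa> \<le> \<kappa> * (V \<bullet> x)" "\<kappa> * (V \<bullet> x) \<le> \<kappa>" using k
      by (auto simp: abs_le_iff intro: mult_left_le) (smt (verit) mult_left_le mult_minus_right)
    then show ?thesis by (simp add: Y_def)
  qed
  define C where "C = vMF_const DIM(real^'n) \<kappa>"
  have norm1: "(\<integral>\<^sup>+\<theta>. ennreal (exp (\<kappa> * (V \<bullet> \<theta>))) \<partial>?\<sigma>) = ennreal (1 / C)" "C > 0"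
    unfolding C_def by (rule vMF_normalization[OF V k])+
  define mu where "mu = (\<integral>x. Y x \<partial>U)"
  have mu: "mu = 1 / C / Ar"
  proof -
    have "mu = enn2real (\<integral>\<^sup>+x. ennreal (Y x) \<partial>U)"
      unfolding mu_def by (rule integral_eq_nn_integral) (use Ym in \<open>auto simp: Y_def\<close>)
    also have "(\<integral>\<^sup>+x. ennreal (Y x) \<partial>U) = (\<integral>\<^sup>+x. ennreal (Y x) * indicator ?S x \<partial>?\<sigma>) / emeasure ?\<sigma> ?S"
      unfolding U_def sphere_uniform_def
      by (rule nn_integral_uniform_measure[OF _ Ssets]) (use Ymsig in measurable)
    also have "(\<integral>\<^sup>+x. ennreal (Y x) * indicator ?S x \<partial>?\<sigma>) = (\<integral>\<^sup>+x. ennreal (exp (\<kappa> * (V \<bullet> x))) \<partial>?\<sigma>)"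
      by (rule nn_integral_cong) (simp add: Y_def sphere_surface_space)
    finally show ?thesis using norm1 emS Ar0 by (simp add: divide_ennreal)
  qed
  define a where "a = exp (\<kappa> * (V \<bullet> A))"
  have a0: "a > 0" by (simp add: a_def)
  define K where "K = (a\<^sup>2 / mu\<^sup>2 + a * (a\<^sup>2 + (exp \<kappa>)\<^sup>2) / (mu\<^sup>2 * exp (- \<kappa>)))"
  have bound: "\<bar>P_Bexp n V \<kappa> A - P_0 n V \<kappa> A\<bar> \<le> K / (real n)\<^sup>2" if n: "1 \<le> n" for n
  proof -
    have PB: "P_Bexp n V \<kappa> A = (\<integral>X. a / (a + (\<Sum>i<n. Y (X i))) \<partial>PiM {..<n} (\<lambda>_. U))"
      by (simp add: P_Bexp_def a_def Y_def U_def)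
    have P0: "P_0 n V \<kappa> A = a / (real n * mu)"
    proof -
      have CC: "vMF_const CARD('n) \<kappa> = C" by (simp add: C_def)
      show ?thesis unfolding P_0_def f_vMF_def area mu a_def CC using Ar0 norm1(2) by simp
    qed
    show ?thesis unfolding PB P0 K_def mu_def
      by (rule main_bound[OF U Ym _ Yb a0 n]) simp
  qed
  have "(\<lambda>n. P_Bexp n V \<kappa> A - P_0 n V \<kappa> A) \<in> O(\<lambda>n. 1 / (real n)\<^sup>2)"
  proof (rule bigoI[where c=K])
    show "\<forall>\<^sub>F n in at_top. norm (P_Bexp n V \<kappa> A - P_0 n V \<kappa> A) \<le> K * norm (1 / (real n)\<^sup>2)"
      using eventually_ge_at_top[of "1::nat"] by eventually_elim (use bound in simp)
  qed
  moreover have "(\<lambda>n. 1 / (real n)\<^sup>2) \<in> o(\<lambda>n. 1 / (real n * sqrt (real n)))" by real_asymp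
  ultimately show ?thesis by (rule landau_o.big_small_trans)
qed


end
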